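(* Let $(a_k)_{k\in\mathbb{Z}}$ be real numbers, all but finitely many zero, and $D_0=\sum_{k}a_k\partial_k$. A function $\xi\in L^2(\mathbb{R}^{\mathbb{Z}},\nu_0^{gc})$ is $D_0$-closed if and only if, for every $N\ge 0$, the orthogonal projection $\mathrm{Proj}_{\mathcal{H}_N}\xi$ of $\xi$ onto the degree-$N$ subspace $\mathcal{H}_N$ is $D_0$-closed.
   Context: $\nu_0^{gc}=\bigotimes_{i\in\mathbb{Z}}\frac{1}{\sqrt{2\pi}}e^{-x_i^2/2}dx_i$ on $\mathbb{R}^{\mathbb{Z}}$. Hermite polynomials: $H_i(x)=\frac{(-1)^i}{i!}e^{x^2/2}\frac{d^i}{dx^i}e^{-x^2/2}$, $i\in\mathbb{N}$. A multi-index is a sequence $I=(i_n)_{n\in\mathbb{Z}}$ of nonnegative integers with finitely many nonzero entries; its degree is $|I|=\sum_n i_n$. $H_I(x)=\prod_{n}H_{i_n}(x_n)$, and $H_I=0$ if $I$ has a negative entry. $\mathcal{H}_N$ is the closed linear span of $\{H_I:|I|=N\}$; $L^2(\mathbb{R}^{\mathbb{Z}},\nu_0^{gc})=\bigoplus_{N\ge0}\mathcal{H}_N$. The shift is $(\tau x)_n=x_{n+1}$, $(\tau f)(x)=f(\tau x)$. $D_n=\sum_k a_k\partial_{k+n}$. A function $\xi\in L^2(\nu_0^{gc})$ is $D_0$-closed if $D_n(\tau^m\xi)=D_m(\tau^n\xi)$ in the weak sense (tested against polynomials in finitely many coordinates via the $L^2(\nu_0^{gc})$-adjoints $D_n^*$,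 $\partial_j^*=-\partial_j+x_j$) for all $m,n\in\mathbb{Z}$. *)

theory Defs
  imports "HOL-Probability.Probability"
begin

definition nu0 :: "(int \<Rightarrow> real) measure" where
  "nu0 = (\<Pi>\<^sub>M i\<in>(UNIV::int set). density lborel std_normal_density)"

definition L2 :: "((int \<Rightarrow> real) \<Rightarrow> real) \<Rightarrow> bool" where
  "L2 f \<longleftrightarrow> f \<in> borel_measurable nu0 \<and> integrable nu0 (\<lambda>x. (f x)\<^sup>2)"

definition supp :: "(int \<Rightarrow> nat) \<Rightarrow> int set" where
  "supp I = {n. I n \<noteq> 0}"

definition multi_index :: "(int \<Rightarrow> nat) \<Rightarrow> bool" where
  "multi_index I \<longleftrightarrow> finite (supp I)"

definition degree :: "(int \<Rightarrow> nat) \<Rightarrow> nat" where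
  "degree I = (\<Sum>n\<in>supp I. I n)"

definition hermite :: "nat \<Rightarrow> real \<Rightarrow> real" where
  "hermite i x = (-1) ^ i / fact i * exp (x\<^sup>2 / 2) * (deriv ^^ i) (\<lambda>t. exp (- t\<^sup>2 / 2)) x"

definition hermite_multi :: "(int \<Rightarrow> nat) \<Rightarrow> (int \<Rightarrow> real) \<Rightarrow> real" where
  "hermite_multi I x = (\<Prod>n\<in>supp I. hermite (I n) (x n))"

text \<open>P is the orthogonal projection of xi onto H_N = closed span of H_I, |I| = N.\<close>
definition is_proj :: "nat \<Rightarrow> ((int \<Rightarrow> real) \<Rightarrow> real) \<Rightarrow> ((int \<Rightarrow> real) \<Rightarrow> real) \<Rightarrow> bool" where
  "is_proj N xi P \<longleftrightarrow> L2 P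
     \<and> (\<forall>e>0. \<exists>A c. finite A \<and> (\<forall>I\<in>A. multi_index I \<and> degree I = N)
            \<and> (\<integral>x. (P x - (\<Sum>I\<in>A. c I * hermite_multi I x))\<^sup>2 \<partial>nu0) < e)
     \<and> (\<forall>I. multi_index I \<and> degree I = N \<longrightarrow>
            (\<integral>x. (xi x - P x) * hermite_multi I x \<partial>nu0) = 0)"

definition monomial :: "(int \<Rightarrow> nat) \<Rightarrow> (int \<Rightarrow> real) \<Rightarrow> real" where
  "monomial I x = (\<Prod>n\<in>supp I. x n ^ I n)"

definition cyl_poly :: "((int \<Rightarrow> real) \<Rightarrow> real) \<Rightarrow> bool" where
  "cyl_poly \<phi> \<longleftrightarrow> (\<exists>A c. finite A \<and> (\<forall>I\<in>A. multi_index I)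
      \<and> \<phi> = (\<lambda>x. \<Sum>I\<in>A. c I * monomial I x))"

definition partial :: "int \<Rightarrow> ((int \<Rightarrow> real) \<Rightarrow> real) \<Rightarrow> (int \<Rightarrow> real) \<Rightarrow> real" where
  "partial j \<phi> x = deriv (\<lambda>t. \<phi> (x(j := t))) (x j)"

definition Dstar :: "(int \<Rightarrow> real) \<Rightarrow> int \<Rightarrow> ((int \<Rightarrow> real) \<Rightarrow> real) \<Rightarrow> (int \<Rightarrow> real) \<Rightarrow> real" where
  "Dstar a n \<phi> x = (\<Sum>k\<in>{k. a k \<noteq> 0}. a k * (- partial (k + n) \<phi> x + x (k + n) * \<phi> x))"

definition shift :: "int \<Rightarrow> ((int \<Rightarrow> real) \<Rightarrow> real) \<Rightarrow> (int \<Rightarrow> real) \<Rightarrow> real" where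
  "shift m f x = f (\<lambda>n. x (n + m))"

definition D0_closed :: "(int \<Rightarrow> real) \<Rightarrow> ((int \<Rightarrow> real) \<Rightarrow> real) \<Rightarrow> bool" where
  "D0_closed a xi \<longleftrightarrow> (\<forall>m n \<phi>. cyl_poly \<phi> \<longrightarrow>
      (\<integral>x. shift m xi x * Dstar a n \<phi> x \<partial>nu0) = (\<integral>x. shift n xi x * Dstar a m \<phi> x \<partial>nu0))"

end

theory Submission
  imports Defs "HOL-Computational_Algebra.Polynomial"
begin

fun He :: "nat \<Rightarrow> real poly" where
  "He 0 = 1"
| "He (Suc i) = [:0,1:] * He i - pderiv (He i)"

lemma poly_He_Suc: "poly (He (Suc i)) t = t * poly (He i) t - poly (pderiv (He i)) t"
  by simp

lemma deriv_iter_gauss: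
  "(deriv ^^ i) (\<lambda>t. exp (- t\<^sup>2 / 2)) = (\<lambda>t. (-1) ^ i * poly (He i) t * exp (- t\<^sup>2 / 2))"
proof (induction i)
  case 0
  then show ?case by simp
next
  case (Suc i)
  have D: "((\<lambda>t. (-1) ^ i * poly (He i) t * exp (- t\<^sup>2 / 2)) has_real_derivative
      (-1) ^ Suc i * poly (He (Suc i)) t * exp (- t\<^sup>2 / 2)) (at t)" for t
  proof -
    have "((\<lambda>t. (-1) ^ i * poly (He i) t * exp (- t\<^sup>2 / 2)) has_real_derivative
      (-1) ^ i * (poly (pderiv (He i)) t * exp (- t\<^sup>2 / 2) + poly (He i) t * (exp (- t\<^sup>2 / 2) * (- (2 * t) / 2)))) (at t)"
      by (auto intro!: derivative_eq_intros poly_DERIV simp: algebra_simps power2_eq_square)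
    moreover have "(-1) ^ i * (poly (pderiv (He i)) t * exp (- t\<^sup>2 / 2) + poly (He i) t * (exp (- t\<^sup>2 / 2) * (- (2 * t) / 2)))
       = (-1) ^ Suc i * poly (He (Suc i)) t * exp (- t\<^sup>2 / 2)"
      by (simp add: algebra_simps)
    ultimately show ?thesis by simp
  qed
  have "(deriv ^^ Suc i) (\<lambda>t. exp (- t\<^sup>2 / 2)) = deriv ((deriv ^^ i) (\<lambda>t. exp (- t\<^sup>2 / 2)))"
    by simp
  also have "\<dots> = deriv (\<lambda>t. (-1) ^ i * poly (He i) t * exp (- t\<^sup>2 / 2))" by (simp only: Suc.IH)
  finally show ?case
    by (simp only:) (rule ext, rule DERIV_imp_deriv, rule D)
qed

lemma hermite_He: "hermite i x = poly (He i) x / fact i"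
proof -
  have "hermite i x = ((-1) ^ i * (-1) ^ i) * poly (He i) x * (exp (x\<^sup>2 / 2) * exp (- x\<^sup>2 / 2)) / fact i"
    unfolding hermite_def deriv_iter_gauss by (simp add: algebra_simps)
  also have "(-1::real) ^ i * (-1) ^ i = 1" by (simp add: power_mult_distrib[symmetric])
  also have "exp (x\<^sup>2 / 2) * exp (- x\<^sup>2 / 2) = 1" by (simp add: exp_minus field_simps)
  finally show ?thesis by simp
qed

lemma hermite_0[simp]: "hermite 0 x = 1"
  by (simp add: hermite_He)

lemma He_degree_coeff: "Polynomial.degree (He i) \<le> i \<and> coeff (He i) i = 1"
proof (induction i)
  case 0 then show ?case by simp
next
  case (Suc i)
  have d1: "Polynomial.degree ([:0,1:] * He i) \<le> Suc i"
    using degree_mult_le[of "[:0,1::real:]" "He i"] Suc by auto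
  have d2: "Polynomial.degree (pderiv (He i)) \<le> Suc i"
    using degree_pderiv[of "He i"] Suc by auto
  have "Polynomial.degree (He (Suc i)) \<le> Suc i"
    using degree_diff_le[OF d1 d2] by simp
  moreover have "coeff (He (Suc i)) (Suc i) = 1"
  proof -
    have "coeff (pderiv (He i)) (Suc i) = 0"
      using d2 Suc by (simp add: coeff_pderiv coeff_eq_0)
    moreover have "coeff ([:0,1:] * He i) (Suc i) = coeff (He i) i"
      by (simp add: mult_pCons_left)
    ultimately show ?thesis using Suc by simp
  qed
  ultimately show ?case by simp
qed

definition gam :: "real measure" where "gam = density lborel std_normal_density"

lemma prob_gam: "prob_space gam"
  unfolding gam_def by (rule prob_space_normal_density) simp

lemma sets_gam[measurable_cong, simp]: "sets gam = sets borel"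
  by (simp add: gam_def)

lemma space_gam[simp]: "space gam = UNIV"
  by (simp add: gam_def)

definition mom :: "nat \<Rightarrow> real" where
  "mom k = (if even k then fact k / (2 ^ (k div 2) * fact (k div 2)) else 0)"

lemma mom_hbi: "has_bochner_integral gam (\<lambda>x::real. x ^ k) (mom k)"
proof (cases "even k")
  case True
  then obtain j where k: "k = 2 * j" by auto
  show ?thesis unfolding gam_def
    by (rule has_bochner_integral_density) (use std_normal_moment_even[of j] in \<open>auto simp: k mom_def\<close>)
next
  case False
  then obtain j where k: "k = 2 * j + 1" using oddE by blast
  show ?thesis unfolding gam_def
    by (rule has_bochner_integral_density) (use std_normal_moment_odd[of j] in \<open>auto simp: k mom_def\<close>)
qed

lemma int_pow[simp]: "integrable gam (\<lambda>x::real. x ^ k)"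
  using mom_hbi[unfolded has_bochner_integral_iff] by blast

lemma integral_pow: "integral\<^sup>L gam (\<lambda>x::real. x ^ k) = mom k"
  using mom_hbi[unfolded has_bochner_integral_iff] by blast

lemma mom_1: "mom 1 = 0" by (simp add: mom_def)

lemma mom_rec: "mom (Suc (Suc k)) = (Suc k) * mom k"
proof (cases "even k")
  case True
  then obtain j where k: "k = 2 * j" by auto
  have "mom (Suc (Suc k)) = fact (Suc (Suc (2 * j))) / (2 ^ (Suc j) * fact (Suc j))"
    by (simp add: mom_def k)
  also have "\<dots> = (2 * j + 1) * (fact (2 * j) / (2 ^ j * fact j))"
  proof -
    have "(fact j :: real) > 0" "(1 + real j) > 0" by auto
    then show ?thesis by (simp add: fact_Suc divide_simps)
  qed
  finally show ?thesis by (simp add: mom_def k)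
next
  case False then show ?thesis by (simp add: mom_def)
qed

lemma mom_stein: "mom (Suc i) = of_nat i * mom (i - 1)"
  by (cases i) (simp add: mom_def, simp only: mom_rec, simp)

lemma int_poly[simp]: fixes p :: "real poly" shows "integrable gam (\<lambda>x. poly p x)"
  unfolding poly_altdef by (intro Bochner_Integration.integrable_sum integrable_mult_right int_pow)

lemma poly_pderiv_sum: fixes p :: "real poly" shows "poly (pderiv p) x = (\<Sum>i\<le>Polynomial.degree p. coeff p i * (of_nat i * x ^ (i - 1)))"
proof -
  have "((\<lambda>x. \<Sum>i\<le>Polynomial.degree p. coeff p i * x ^ i) has_real_derivative
        (\<Sum>i\<le>Polynomial.degree p. coeff p i * (of_nat i * x ^ (i - 1)))) (at x)"
    by (auto intro!: derivative_eq_intros sum.cong simp: algebra_simps)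
  moreover have "((\<lambda>x. \<Sum>i\<le>Polynomial.degree p. coeff p i * x ^ i) has_real_derivative poly (pderiv p) x) (at x)"
    using poly_DERIV[of p x] unfolding poly_altdef[symmetric] by simp
  ultimately show ?thesis using DERIV_unique by blast
qed

lemma stein: fixes p :: "real poly" shows "integral\<^sup>L gam (\<lambda>x. x * poly p x) = integral\<^sup>L gam (poly (pderiv p))"
proof -
  have "integral\<^sup>L gam (\<lambda>x. x * poly p x) = integral\<^sup>L gam (\<lambda>x. \<Sum>i\<le>Polynomial.degree p. coeff p i * x ^ Suc i)"
    unfolding poly_altdef by (simp add: sum_distrib_left algebra_simps power_Suc)
  also have "\<dots> = (\<Sum>i\<le>Polynomial.degree p. coeff p i * mom (Suc i))"
    by (subst Bochner_Integration.integral_sum) (auto simp: integral_pow mult.assoc simp del: power_Suc)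
  also have "\<dots> = (\<Sum>i\<le>Polynomial.degree p. coeff p i * of_nat i * mom (i - 1))"
    by (simp add: mom_stein mult.assoc)
  also have "\<dots> = integral\<^sup>L gam (\<lambda>x. \<Sum>i\<le>Polynomial.degree p. coeff p i * (of_nat i * x ^ (i - 1)))"
    by (subst Bochner_Integration.integral_sum) (auto simp: integral_pow mult.assoc)
  also have "\<dots> = integral\<^sup>L gam (poly (pderiv p))"
  proof -
    have "poly (pderiv p) = (\<lambda>x. \<Sum>i\<le>Polynomial.degree p. coeff p i * (of_nat i * x ^ (i - 1)))"
      by (rule ext) (rule poly_pderiv_sum)
    then show ?thesis by simp
  qed
  finally show ?thesis .
qed

lemma poly_mult_fun: "poly (p * q) = (\<lambda>x. poly p x * poly q x)"
  by auto

lemma int_poly2[simp]: fixes p q :: "real poly" shows "integrable gam (\<lambda>x. poly p x * poly q x)"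
  using int_poly[of "p * q"] by (simp add: poly_mult_fun)

lemma E_poly: "integral\<^sup>L gam (poly p) = (\<Sum>i\<le>Polynomial.degree p. coeff p i * mom i)"
proof -
  have "poly p = (\<lambda>x. \<Sum>i\<le>Polynomial.degree p. coeff p i * x ^ i)"
    by (rule ext) (rule poly_altdef)
  then show ?thesis
    by (simp add: Bochner_Integration.integral_sum integral_pow)
qed

lemma E_He_Suc: "integral\<^sup>L gam (poly (He (Suc i) * q)) = integral\<^sup>L gam (poly (He i * pderiv q))"
proof -
  have e: "poly (He (Suc i) * q) = (\<lambda>x. x * poly (He i * q) x - poly (pderiv (He i) * q) x)"
    by (rule ext) (simp add: algebra_simps)
  have A: "integral\<^sup>L gam (poly (He (Suc i) * q)) =
        integral\<^sup>L gam (\<lambda>x. x * poly (He i * q) x) - integral\<^sup>L gam (poly (pderiv (He i) * q))"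
    unfolding e
    by (rule Bochner_Integration.integral_diff)
       (auto simp: mult.assoc[symmetric] intro!: int_poly[of "[:0,1:] * He i * q", simplified])
  have B: "integral\<^sup>L gam (\<lambda>x. x * poly (He i * q) x) = integral\<^sup>L gam (poly (pderiv (He i * q)))"
    by (rule stein)
  have e2: "poly (pderiv (He i * q)) = (\<lambda>x. poly (He i * pderiv q) x + poly (pderiv (He i) * q) x)"
    by (rule ext) (simp add: pderiv_mult)
  have C: "integral\<^sup>L gam (poly (pderiv (He i * q))) = integral\<^sup>L gam (poly (He i * pderiv q)) + integral\<^sup>L gam (poly (pderiv (He i) * q))"
    unfolding e2 by (rule Bochner_Integration.integral_add) (auto simp del: poly_mult simp: poly_mult_fun[symmetric])
  show ?thesis using A B C by linarith
qed

lemma E_He_main: "Polynomial.degree q \<le> i \<Longrightarrow> integral\<^sup>L gam (poly (He i * q)) = fact i * coeff q i"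
proof (induction i arbitrary: q)
  case 0
  then show ?case by (simp add: E_poly mom_def)
next
  case (Suc i)
  have d: "Polynomial.degree (pderiv q) \<le> i"
    using Suc.prems degree_pderiv[of q] by simp
  have "integral\<^sup>L gam (poly (He (Suc i) * q)) = integral\<^sup>L gam (poly (He i * pderiv q))"
    by (rule E_He_Suc)
  also have "\<dots> = fact i * coeff (pderiv q) i" by (rule Suc.IH[OF d])
  also have "\<dots> = fact (Suc i) * coeff q (Suc i)"
    by (simp add: coeff_pderiv fact_Suc algebra_simps)
  finally show ?case .
qed

lemma coeff_He: "coeff (He j) i = (if i = j then 1 else if j < i then 0 else coeff (He j) i)"
  using He_degree_coeff[of j] by (auto simp: coeff_eq_0)

lemma hermite_orth: "integral\<^sup>L gam (\<lambda>x. hermite i x * hermite j x) = (if i = j then 1 / fact i else 0)"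
proof -
  have key: "integral\<^sup>L gam (\<lambda>x. hermite i x * hermite j x) = integral\<^sup>L gam (poly (He i * He j)) / (fact i * fact j)"
  proof -
    have "(\<lambda>x. hermite i x * hermite j x) = (\<lambda>x. poly (He i * He j) x / (fact i * fact j))"
      by (rule ext) (simp add: hermite_He)
    then show ?thesis by (simp add: poly_mult_fun)
  qed
  show ?thesis
  proof (cases "j \<le> i")
    case True
    have "integral\<^sup>L gam (poly (He i * He j)) = fact i * coeff (He j) i"
      using He_degree_coeff[of j] True by (intro E_He_main) auto
    then show ?thesis unfolding key using True He_degree_coeff[of j]
      by (auto simp: coeff_eq_0)
  next
    case False
    have "integral\<^sup>L gam (poly (He j * He i)) = fact j * coeff (He i) j"
      using He_degree_coeff[of i] False by (intro E_He_main) auto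
    then show ?thesis unfolding key using False He_degree_coeff[of i]
      by (auto simp: coeff_eq_0 mult.commute)
  qed
qed

lemma hermite_span:
  fixes p :: "real poly"
  shows "Polynomial.degree p \<le> n \<Longrightarrow> \<exists>b. \<forall>x. poly p x = (\<Sum>j\<le>n. b j * hermite j x)"
proof (induction n arbitrary: p)
  case 0
  then have "p = [:coeff p 0:]" using degree_0_id[of p] by simp
  then obtain c where "p = [:c:]" by blast
  then show ?case by (intro exI[of _ "\<lambda>_. c"]) simp
next
  case (Suc n)
  define r where "r = p - smult (coeff p (Suc n)) (He (Suc n))"
  have d1: "Polynomial.degree r \<le> Suc n"
    unfolding r_def using Suc.prems He_degree_coeff[of "Suc n"]
    by (intro degree_diff_le) (auto intro: order.trans[OF degree_smult_le])
  have c: "coeff r (Suc n) = 0"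
    unfolding r_def using He_degree_coeff[of "Suc n"] by simp
  have dr: "Polynomial.degree r \<le> n"
  proof (rule ccontr)
    assume "\<not> ?thesis"
    then have "Polynomial.degree r = Suc n" using d1 by simp
    then have "r = 0" using c leading_coeff_0_iff by metis
    then show False using \<open>Polynomial.degree r = Suc n\<close> by simp
  qed
  from Suc.IH[OF dr] obtain b where b: "\<And>x. poly r x = (\<Sum>j\<le>n. b j * hermite j x)" by blast
  define b' where "b' = b(Suc n := coeff p (Suc n) * fact (Suc n))"
  have "poly p x = (\<Sum>j\<le>Suc n. b' j * hermite j x)" for x
  proof -
    have "poly p x = poly r x + coeff p (Suc n) * poly (He (Suc n)) x"
      unfolding r_def by simp
    also have "\<dots> = (\<Sum>j\<le>n. b' j * hermite j x) + b' (Suc n) * hermite (Suc n) x"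
      by (simp add: b b'_def hermite_He)
    finally show ?thesis by simp
  qed
  then show ?case by blast
qed

definition spanB :: "((int \<Rightarrow> nat) \<Rightarrow> (int \<Rightarrow> real) \<Rightarrow> real) \<Rightarrow> ((int \<Rightarrow> real) \<Rightarrow> real) \<Rightarrow> bool" where
  "spanB B f \<longleftrightarrow> (\<exists>A c. finite A \<and> (\<forall>I\<in>A. multi_index I) \<and> f = (\<lambda>x. \<Sum>I\<in>A. c I * B I x))"

lemma cyl_poly_spanB: "cyl_poly = spanB monomial"
  by (rule ext) (simp add: cyl_poly_def spanB_def)

lemma spanB_basis: "multi_index I \<Longrightarrow> spanB B (B I)"
  unfolding spanB_def by (rule exI[of _ "{I}"], rule exI[of _ "\<lambda>_. 1"]) auto

lemma spanB_zero: "spanB B (\<lambda>x. 0)"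
  unfolding spanB_def by (rule exI[of _ "{}"]) auto

lemma spanB_scale: "spanB B f \<Longrightarrow> spanB B (\<lambda>x. r * f x)"
  unfolding spanB_def
  by (elim exE conjE, rule_tac x=A in exI, rule_tac x="\<lambda>I. r * c I" in exI)
     (auto simp: sum_distrib_left mult.assoc)

lemma spanB_add: assumes "spanB B f" "spanB B g" shows "spanB B (\<lambda>x. f x + g x)"
proof -
  obtain A c where A: "finite A" "\<forall>I\<in>A. multi_index I" "f = (\<lambda>x. \<Sum>I\<in>A. c I * B I x)"
    using assms(1) unfolding spanB_def by blast
  obtain A' c' where A': "finite A'" "\<forall>I\<in>A'. multi_index I" "g = (\<lambda>x. \<Sum>I\<in>A'. c' I * B I x)"
    using assms(2) unfolding spanB_def by blast
  define d where "d I = (if I \<in> A then c I else 0) + (if I \<in> A' then c' I else 0)" for I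
  have "(\<lambda>x. f x + g x) = (\<lambda>x. \<Sum>I\<in>A \<union> A'. d I * B I x)"
  proof
    fix x
    have "(\<Sum>I\<in>A \<union> A'. d I * B I x) = (\<Sum>I\<in>A \<union> A'. (if I \<in> A then c I * B I x else 0)) + (\<Sum>I\<in>A \<union> A'. (if I \<in> A' then c' I * B I x else 0))"
      unfolding sum.distrib[symmetric] by (rule sum.cong) (auto simp: d_def algebra_simps)
    also have "(\<Sum>I\<in>A \<union> A'. (if I \<in> A then c I * B I x else 0)) = (\<Sum>I\<in>A. c I * B I x)"
      by (rule sum.mono_neutral_cong_right) (use A A' in auto)
    also have "(\<Sum>I\<in>A \<union> A'. (if I \<in> A' then c' I * B I x else 0)) = (\<Sum>I\<in>A'. c' I * B I x)"
      by (rule sum.mono_neutral_cong_right) (use A A' in auto)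
    finally show "f x + g x = (\<Sum>I\<in>A \<union> A'. d I * B I x)" using A A' by simp
  qed
  then show ?thesis unfolding spanB_def using A A' by blast
qed

lemma spanB_sum: "finite T \<Longrightarrow> (\<And>t. t \<in> T \<Longrightarrow> spanB B (f t)) \<Longrightarrow> spanB B (\<lambda>x. \<Sum>t\<in>T. f t x)"
proof (induction T rule: finite_induct)
  case empty then show ?case by (simp add: spanB_zero)
next
  case (insert t T)
  then show ?case by (simp add: spanB_add)
qed

lemma spanB_lincomb: "finite T \<Longrightarrow> (\<And>t. t \<in> T \<Longrightarrow> spanB B (f t)) \<Longrightarrow> spanB B (\<lambda>x. \<Sum>t\<in>T. r t * f t x)"
  by (rule spanB_sum) (auto intro: spanB_scale)

lemma spanB_E: "spanB B f \<Longrightarrow> (\<And>A c. finite A \<Longrightarrow> (\<forall>I\<in>A. multi_index I) \<Longrightarrow> f = (\<lambda>x. \<Sum>I\<in>A. c I * B I x) \<Longrightarrow> P) \<Longrightarrow> P"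
  unfolding spanB_def by blast

lemma supp_upd: "supp (I(n := v)) \<subseteq> insert n (supp I)"
  by (auto simp: supp_def)

lemma multi_index_upd[simp]: "multi_index I \<Longrightarrow> multi_index (I(n := v))"
  unfolding multi_index_def using supp_upd by (meson finite_insert finite_subset)

lemma multi_index_zero[simp]: "multi_index (\<lambda>_. 0)"
  by (simp add: multi_index_def supp_def)

lemma hermite_multi_superset:
  "finite S \<Longrightarrow> supp I \<subseteq> S \<Longrightarrow> hermite_multi I x = (\<Prod>n\<in>S. hermite (I n) (x n))"
  unfolding hermite_multi_def
  by (rule prod.mono_neutral_left) (auto simp: supp_def)

lemma monomial_superset:
  "finite S \<Longrightarrow> supp I \<subseteq> S \<Longrightarrow> monomial I x = (\<Prod>n\<in>S. x n ^ I n)"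
  unfolding monomial_def
  by (rule prod.mono_neutral_left) (auto simp: supp_def)

lemma degree_superset:
  "finite S \<Longrightarrow> supp I \<subseteq> S \<Longrightarrow> Defs.degree I = (\<Sum>n\<in>S. I n)"
  unfolding degree_def
  by (rule sum.mono_neutral_left) (auto simp: supp_def)

lemma hermite_multi_zero: "hermite_multi (\<lambda>_. 0) x = 1"
  by (simp add: hermite_multi_def supp_def)

lemma H_upd:
  assumes "multi_index I"
  shows "hermite_multi (I(n := j)) x = hermite_multi (I(n := 0)) x * hermite j (x n)"
proof -
  define S where "S = insert n (supp I)"
  have S: "finite S" using assms by (simp add: S_def multi_index_def)
  have n: "n \<in> S" by (simp add: S_def)
  have "hermite_multi (I(n := j)) x = (\<Prod>k\<in>S. hermite ((I(n := j)) k) (x k))"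
    by (rule hermite_multi_superset[OF S]) (use supp_upd in \<open>auto simp: S_def\<close>)
  also have "\<dots> = hermite j (x n) * (\<Prod>k\<in>S - {n}. hermite (I k) (x k))"
    using S n by (simp add: prod.remove)
  finally have 1: "hermite_multi (I(n := j)) x = hermite j (x n) * (\<Prod>k\<in>S - {n}. hermite (I k) (x k))" .
  have "hermite_multi (I(n := 0)) x = (\<Prod>k\<in>S. hermite ((I(n := 0)) k) (x k))"
    by (rule hermite_multi_superset[OF S]) (use supp_upd in \<open>auto simp: S_def\<close>)
  also have "\<dots> = (\<Prod>k\<in>S - {n}. hermite (I k) (x k))"
    using S n by (simp add: prod.remove)
  finally show ?thesis using 1 by simp
qed

lemma H_split: "multi_index I \<Longrightarrow> hermite_multi I x = hermite_multi (I(n := 0)) x * hermite (I n) (x n)"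
  using H_upd[of I n "I n" x] by simp

lemma H_indep: "hermite_multi (I(n := 0)) (x(n := t)) = hermite_multi (I(n := 0)) x"
  unfolding hermite_multi_def by (rule prod.cong) (auto simp: supp_def)

lemma degree_upd:
  assumes "multi_index I"
  shows "Defs.degree (I(n := v)) + I n = Defs.degree I + v"
proof -
  define S where "S = insert n (supp I)"
  have S: "finite S" using assms by (simp add: S_def multi_index_def)
  have n: "n \<in> S" by (simp add: S_def)
  have "Defs.degree (I(n := v)) = (\<Sum>k\<in>S. (I(n := v)) k)"
    by (rule degree_superset[OF S]) (use supp_upd in \<open>auto simp: S_def\<close>)
  also have "\<dots> = v + (\<Sum>k\<in>S - {n}. I k)"
    using S n by (simp add: sum.remove)
  finally have 1: "Defs.degree (I(n := v)) = v + (\<Sum>k\<in>S - {n}. I k)" .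
  have "Defs.degree I = (\<Sum>k\<in>S. I k)"
    by (rule degree_superset[OF S]) (auto simp: S_def)
  also have "\<dots> = I n + (\<Sum>k\<in>S - {n}. I k)"
    using S n by (simp add: sum.remove)
  finally show ?thesis using 1 by simp
qed

abbreviation hs where "hs \<equiv> spanB hermite_multi"

lemma hs_mult_poly_single:
  assumes I: "multi_index I"
  shows "hs (\<lambda>x. hermite_multi I x * poly p (x n))"
proof -
  define q where "q = smult (1 / fact (I n)) (He (I n)) * p"
  have q: "poly q t = hermite (I n) t * poly p t" for t
    by (simp add: q_def hermite_He)
  obtain b where b: "\<And>t. poly q t = (\<Sum>j\<le>Polynomial.degree q. b j * hermite j t)"
    using hermite_span[of q "Polynomial.degree q"] by blast
  have "(\<lambda>x. hermite_multi I x * poly p (x n)) = (\<lambda>x. \<Sum>j\<le>Polynomial.degree q. b j * hermite_multi (I(n := j)) x)"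
  proof
    fix x
    have "hermite_multi I x * poly p (x n) = hermite_multi (I(n := 0)) x * poly q (x n)"
      using H_split[OF I, of x n] by (simp add: q)
    also have "\<dots> = (\<Sum>j\<le>Polynomial.degree q. b j * hermite_multi (I(n := j)) x)"
      unfolding b sum_distrib_left
    proof (rule sum.cong[OF refl])
      fix j
      show "hermite_multi (I(n := 0)) x * (b j * hermite j (x n)) = b j * hermite_multi (I(n := j)) x"
        using H_upd[OF I, of n j x] by simp
    qed
    finally show "hermite_multi I x * poly p (x n) = (\<Sum>j\<le>Polynomial.degree q. b j * hermite_multi (I(n := j)) x)" .
  qed
  moreover have "hs (\<lambda>x. \<Sum>j\<le>Polynomial.degree q. b j * hermite_multi (I(n := j)) x)"
    by (rule spanB_lincomb) (auto intro!: spanB_basis simp: I)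
  ultimately show ?thesis by simp
qed

lemma hs_mult_poly:
  assumes "hs f" shows "hs (\<lambda>x. f x * poly p (x n))"
proof -
  obtain A c where A: "finite A" "\<forall>I\<in>A. multi_index I" "f = (\<lambda>x. \<Sum>I\<in>A. c I * hermite_multi I x)"
    using assms by (rule spanB_E)
  have "(\<lambda>x. f x * poly p (x n)) = (\<lambda>x. \<Sum>I\<in>A. c I * (hermite_multi I x * poly p (x n)))"
    using A by (simp add: sum_distrib_right mult.assoc)
  moreover have "hs (\<lambda>x. \<Sum>I\<in>A. c I * (hermite_multi I x * poly p (x n)))"
    using A by (intro spanB_lincomb) (auto intro: hs_mult_poly_single)
  ultimately show ?thesis by simp
qed

lemma hermite_multi_zero_fun: "hermite_multi (\<lambda>_. 0) = (\<lambda>x. 1)"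
  by (rule ext) (rule hermite_multi_zero)

lemma hs_one: "hs (\<lambda>x. 1)"
  using spanB_basis[OF multi_index_zero, of hermite_multi] by (simp add: hermite_multi_zero_fun)

lemma hs_prod_pow: "finite S \<Longrightarrow> hs (\<lambda>x. \<Prod>k\<in>S. x k ^ e k)"
proof (induction S rule: finite_induct)
  case empty then show ?case by (simp add: hs_one)
next
  case (insert k S)
  have "(\<lambda>x::int\<Rightarrow>real. \<Prod>k\<in>insert k S. x k ^ e k) = (\<lambda>x. (\<Prod>k\<in>S. x k ^ e k) * poly (monom 1 (e k)) (x k))"
    using insert by (simp add: poly_monom mult.commute)
  then show ?case using hs_mult_poly[OF insert.IH] by simp
qed

lemma monomial_hs: "multi_index I \<Longrightarrow> hs (monomial I)"
proof -
  assume "multi_index I"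
  then have "finite (supp I)" by (simp add: multi_index_def)
  have "monomial I = (\<lambda>x. \<Prod>k\<in>supp I. x k ^ I k)"
    by (rule ext) (simp add: monomial_def)
  then show ?thesis using hs_prod_pow[OF \<open>finite (supp I)\<close>] by simp
qed

lemma cyl_hs: "cyl_poly \<phi> \<Longrightarrow> hs \<phi>"
  unfolding cyl_poly_spanB
  by (erule spanB_E) (auto intro!: spanB_lincomb monomial_hs)

lemma supp_add: "supp (\<lambda>n. I n + J n) = supp I \<union> supp J"
  by (auto simp: supp_def)

lemma multi_index_add: "multi_index I \<Longrightarrow> multi_index J \<Longrightarrow> multi_index (\<lambda>n. I n + J n)"
  by (simp add: multi_index_def supp_add)

lemma monomial_mult:
  assumes "multi_index I" "multi_index J"
  shows "monomial I x * monomial J x = monomial (\<lambda>n. I n + J n) x"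
proof -
  define S where "S = supp I \<union> supp J"
  have S: "finite S" using assms by (simp add: S_def multi_index_def)
  have "monomial I x = (\<Prod>n\<in>S. x n ^ I n)" by (rule monomial_superset[OF S]) (auto simp: S_def)
  moreover have "monomial J x = (\<Prod>n\<in>S. x n ^ J n)" by (rule monomial_superset[OF S]) (auto simp: S_def)
  moreover have "monomial (\<lambda>n. I n + J n) x = (\<Prod>n\<in>S. x n ^ (I n + J n))"
    by (rule monomial_superset[OF S]) (auto simp: S_def supp_add)
  ultimately show ?thesis by (simp add: power_add prod.distrib)
qed

lemma cyl_mult:
  assumes "cyl_poly f" "cyl_poly g" shows "cyl_poly (\<lambda>x. f x * g x)"
proof -
  obtain A c where A: "finite A" "\<forall>I\<in>A. multi_index I" "f = (\<lambda>x. \<Sum>I\<in>A. c I * monomial I x)"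
    using assms(1) unfolding cyl_poly_spanB by (rule spanB_E)
  obtain B d where B: "finite B" "\<forall>I\<in>B. multi_index I" "g = (\<lambda>x. \<Sum>I\<in>B. d I * monomial I x)"
    using assms(2) unfolding cyl_poly_spanB by (rule spanB_E)
  have "(\<lambda>x. f x * g x) = (\<lambda>x. \<Sum>I\<in>A. c I * (\<Sum>J\<in>B. d J * monomial (\<lambda>n. I n + J n) x))"
  proof
    fix x
    have "f x * g x = (\<Sum>I\<in>A. \<Sum>J\<in>B. c I * monomial I x * (d J * monomial J x))"
      by (simp add: A B sum_product)
    also have "\<dots> = (\<Sum>I\<in>A. c I * (\<Sum>J\<in>B. d J * monomial (\<lambda>n. I n + J n) x))"
      using A B by (auto simp: sum_distrib_left monomial_mult[symmetric] algebra_simps intro!: sum.cong)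
    finally show "f x * g x = (\<Sum>I\<in>A. c I * (\<Sum>J\<in>B. d J * monomial (\<lambda>n. I n + J n) x))" .
  qed
  moreover have "spanB monomial (\<lambda>x. \<Sum>I\<in>A. c I * (\<Sum>J\<in>B. d J * monomial (\<lambda>n. I n + J n) x))"
    using A B by (intro spanB_lincomb) (auto intro!: spanB_basis multi_index_add)
  ultimately show ?thesis unfolding cyl_poly_spanB by simp
qed

lemma monomial_single: "monomial ((\<lambda>_. 0)(n := i)) x = x n ^ i"
proof -
  have "supp ((\<lambda>_. 0)(n := i)) \<subseteq> {n}" by (auto simp: supp_def)
  from monomial_superset[OF _ this, of x] show ?thesis by simp
qed

lemma multi_index_single: "multi_index ((\<lambda>_. 0)(n := i))"
  by simp

lemma cyl_coord_poly: "cyl_poly (\<lambda>x. poly p (x n))"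
proof -
  have "(\<lambda>x. poly p (x n)) = (\<lambda>x. \<Sum>i\<le>Polynomial.degree p. coeff p i * monomial ((\<lambda>_. 0)(n := i)) x)"
    by (simp add: monomial_single poly_altdef)
  moreover have "spanB monomial (\<lambda>x. \<Sum>i\<le>Polynomial.degree p. coeff p i * monomial ((\<lambda>_. 0)(n := i)) x)"
    by (intro spanB_lincomb) (auto intro!: spanB_basis simp del: fun_upd_apply)
  ultimately show ?thesis unfolding cyl_poly_spanB by simp
qed

lemma cyl_one: "cyl_poly (\<lambda>x. 1)"
  using cyl_coord_poly[of "[:1:]" 0] by simp

lemma cyl_prod: "finite S \<Longrightarrow> cyl_poly (\<lambda>x. \<Prod>k\<in>S. poly (p k) (x k))"
proof (induction S rule: finite_induct)
  case empty then show ?case by (simp add: cyl_one)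
next
  case (insert k S)
  then show ?case using cyl_mult[OF cyl_coord_poly[of "p k" k] insert.IH] by simp
qed

lemma H_cyl: "multi_index I \<Longrightarrow> cyl_poly (hermite_multi I)"
proof -
  assume "multi_index I"
  then have f: "finite (supp I)" by (simp add: multi_index_def)
  have eq: "hermite_multi I = (\<lambda>x. \<Prod>k\<in>supp I. poly (smult (1 / fact (I k)) (He (I k))) (x k))"
    by (rule ext) (simp add: hermite_multi_def hermite_He)
  show ?thesis unfolding eq by (rule cyl_prod[OF f])
qed

lemma hs_cyl: "hs f \<Longrightarrow> cyl_poly f"
  unfolding cyl_poly_spanB
  by (erule spanB_E) (auto intro!: spanB_lincomb H_cyl[unfolded cyl_poly_spanB])

definition hsum :: "(int \<Rightarrow> nat) set \<Rightarrow> ((int \<Rightarrow> nat) \<Rightarrow> real) \<Rightarrow> (int \<Rightarrow> real) \<Rightarrow> real" where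
  "hsum A c = (\<lambda>x. \<Sum>I\<in>A. c I * hermite_multi I x)"

lemma hsum_split:
  assumes "\<forall>I\<in>A. multi_index I"
  shows "hsum A c (x(j := t)) = (\<Sum>I\<in>A. c I * hermite_multi (I(j := 0)) x * hermite (I j) t)"
  unfolding hsum_def
proof (rule sum.cong[OF refl])
  fix I assume "I \<in> A"
  then have I: "multi_index I" using assms by blast
  show "c I * hermite_multi I (x(j := t)) = c I * hermite_multi (I(j := 0)) x * hermite (I j) t"
    using H_split[OF I, of "x(j := t)" j] by (simp add: H_indep)
qed

lemma partial_hsum:
  assumes "\<forall>I\<in>A. multi_index I"
  shows "partial j (hsum A c) x = (\<Sum>I\<in>A. c I * hermite_multi (I(j := 0)) x * (poly (pderiv (He (I j))) (x j) / fact (I j)))"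
proof -
  have eq: "(\<lambda>t. hsum A c (x(j := t))) = (\<lambda>t. \<Sum>I\<in>A. c I * hermite_multi (I(j := 0)) x * (poly (He (I j)) t / fact (I j)))"
    by (rule ext) (simp add: hsum_split[OF assms] hermite_He)
  have "((\<lambda>t. \<Sum>I\<in>A. c I * hermite_multi (I(j := 0)) x * (poly (He (I j)) t / fact (I j))) has_real_derivative
         (\<Sum>I\<in>A. c I * hermite_multi (I(j := 0)) x * (poly (pderiv (He (I j))) (x j) / fact (I j)))) (at (x j))"
    by (auto intro!: derivative_eq_intros poly_DERIV sum.cong simp: algebra_simps)
  then show ?thesis unfolding partial_def eq by (rule DERIV_imp_deriv)
qed

lemma creation: "- (poly (pderiv (He i)) t / fact i) + t * hermite i t = (of_nat i + 1) * hermite (Suc i) t"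
proof -
  have "(of_nat i + 1) * hermite (Suc i) t = (of_nat i + 1) * (t * poly (He i) t - poly (pderiv (He i)) t) / ((of_nat i + 1) * fact i)"
    by (simp add: hermite_He fact_Suc algebra_simps)
  also have "\<dots> = (t * poly (He i) t - poly (pderiv (He i)) t) / fact i"
    by simp
  finally show ?thesis by (simp add: hermite_He diff_divide_distrib)
qed

lemma Dpart:
  assumes "\<forall>I\<in>A. multi_index I"
  shows "- partial j (hsum A c) x + x j * hsum A c x =
    (\<Sum>I\<in>A. c I * (of_nat (I j) + 1) * hermite_multi (I(j := Suc (I j))) x)"
proof -
  have h: "hsum A c x = (\<Sum>I\<in>A. c I * hermite_multi (I(j := 0)) x * hermite (I j) (x j))"
    using hsum_split[OF assms, of c x j "x j"] by simp
  have "- partial j (hsum A c) x + x j * hsum A c x =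
     (\<Sum>I\<in>A. c I * hermite_multi (I(j := 0)) x * (- (poly (pderiv (He (I j))) (x j) / fact (I j)) + x j * hermite (I j) (x j)))"
    unfolding partial_hsum[OF assms] h
    by (simp add: sum_distrib_left sum_negf[symmetric] sum.distrib[symmetric] algebra_simps)
  also have "\<dots> = (\<Sum>I\<in>A. c I * (of_nat (I j) + 1) * hermite_multi (I(j := Suc (I j))) x)"
  proof (rule sum.cong[OF refl])
    fix I assume "I \<in> A"
    then have I: "multi_index I" using assms by blast
    show "c I * hermite_multi (I(j := 0)) x * (- (poly (pderiv (He (I j))) (x j) / fact (I j)) + x j * hermite (I j) (x j)) =
          c I * (of_nat (I j) + 1) * hermite_multi (I(j := Suc (I j))) x"
      unfolding creation H_upd[OF I, of j "Suc (I j)" x] by simp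
  qed
  finally show ?thesis .
qed

definition up :: "(int \<Rightarrow> nat) \<Rightarrow> int \<Rightarrow> (int \<Rightarrow> nat)" where
  "up I j = I(j := Suc (I j))"

lemma Dstar_hsum:
  assumes "\<forall>I\<in>A. multi_index I"
  shows "Dstar a n (hsum A c) x =
    (\<Sum>k\<in>{k. a k \<noteq> 0}. \<Sum>I\<in>A. a k * c I * (of_nat (I (k + n)) + 1) * hermite_multi (up I (k + n)) x)"
  unfolding Dstar_def
proof (rule sum.cong[OF refl])
  fix k
  have "a k * (- partial (k + n) (hsum A c) x + x (k + n) * hsum A c x) =
     a k * (\<Sum>I\<in>A. c I * (of_nat (I (k + n)) + 1) * hermite_multi (I(k + n := Suc (I (k + n)))) x)"
    by (simp only: Dpart[OF assms])
  then show "a k * (- partial (k + n) (hsum A c) x + x (k + n) * hsum A c x) =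
    (\<Sum>I\<in>A. a k * c I * (of_nat (I (k + n)) + 1) * hermite_multi (up I (k + n)) x)"
    by (simp add: up_def sum_distrib_left mult.assoc)
qed

lemma multi_index_up[simp]: "multi_index I \<Longrightarrow> multi_index (up I j)"
  by (simp add: up_def)

lemma degree_up: "multi_index I \<Longrightarrow> Defs.degree (up I j) = Suc (Defs.degree I)"
  using degree_upd[of I j "Suc (I j)"] by (simp add: up_def)

interpretation NU: product_prob_space "\<lambda>_::int. gam" "UNIV :: int set"
  by (simp add: product_prob_space_def product_prob_space_axioms_def product_sigma_finite_def
      prob_gam prob_space_imp_sigma_finite)

lemma nu0_eq: "nu0 = PiM (UNIV::int set) (\<lambda>_. gam)"
  by (simp add: nu0_def gam_def)

lemma space_nu0[simp]: "space nu0 = UNIV"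
  by (simp add: nu0_eq space_PiM)

lemma prob_nu0: "prob_space nu0"
  unfolding nu0_eq by (rule NU.P.prob_space_axioms)

lemma hermite_borel[measurable]: "hermite i \<in> borel_measurable borel"
proof -
  have "hermite i = (\<lambda>x. poly (He i) x / fact i)" by (rule ext) (simp add: hermite_He)
  moreover have "continuous_on UNIV (\<lambda>x. poly (He i) x / fact i)"
    by (intro continuous_intros) auto
  ultimately show ?thesis using borel_measurable_continuous_onI by simp
qed

lemma comp_meas: "(\<lambda>x. x n) \<in> measurable nu0 borel"
proof -
  have "(\<lambda>x. x n) \<in> measurable (PiM UNIV (\<lambda>_::int. gam)) gam"
    by (rule measurable_component_singleton) simp
  moreover have "measurable (PiM UNIV (\<lambda>_::int. gam)) gam = measurable (PiM UNIV (\<lambda>_::int. gam)) borel"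
    by (rule measurable_cong_sets) simp_all
  ultimately show ?thesis by (simp add: nu0_eq)
qed

lemma coord_fun_meas: "g \<in> borel_measurable borel \<Longrightarrow> (\<lambda>x. g (x n)) \<in> borel_measurable nu0"
  by (rule measurable_compose[OF comp_meas])

lemma H_meas: "hermite_multi I \<in> borel_measurable nu0"
proof -
  have "hermite_multi I = (\<lambda>x. \<Prod>n\<in>supp I. hermite (I n) (x n))"
    by (rule ext) (simp add: hermite_multi_def)
  moreover have "(\<lambda>x. \<Prod>n\<in>supp I. hermite (I n) (x n)) \<in> borel_measurable nu0"
    by (rule borel_measurable_prod) (rule coord_fun_meas[OF hermite_borel])
  ultimately show ?thesis by simp
qed

lemma prod_integral:
  fixes f :: "int \<Rightarrow> real \<Rightarrow> real"
  assumes S: "finite S" and f: "\<And>n. n \<in> S \<Longrightarrow> integrable gam (f n)"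
  shows "integrable nu0 (\<lambda>x. \<Prod>n\<in>S. f n (x n))"
    and "integral\<^sup>L nu0 (\<lambda>x. \<Prod>n\<in>S. f n (x n)) = (\<Prod>n\<in>S. integral\<^sup>L gam (f n))"
proof -
  have fm: "\<And>n. n \<in> S \<Longrightarrow> f n \<in> borel_measurable gam"
    using f borel_measurable_integrable by blast
  have rm: "(\<lambda>x. restrict x S) \<in> measurable nu0 (PiM S (\<lambda>_. gam))"
    unfolding nu0_eq by (rule measurable_restrict_subset) simp
  have gm: "(\<lambda>y. \<Prod>n\<in>S. f n (y n)) \<in> borel_measurable (PiM S (\<lambda>_. gam))"
  proof (intro borel_measurable_prod)
    fix n assume "n \<in> S"
    then show "(\<lambda>y. f n (y n)) \<in> borel_measurable (PiM S (\<lambda>_. gam))"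
      using measurable_compose[OF measurable_component_singleton[of n S "\<lambda>_. gam"] fm[of n]] \<open>n \<in> S\<close> by simp
  qed
  have D: "distr nu0 (PiM S (\<lambda>_. gam)) (\<lambda>x. restrict x S) = PiM S (\<lambda>_. gam)"
    unfolding nu0_eq by (rule NU.distr_PiM_restrict_finite[OF S]) simp
  have eqf: "(\<lambda>x. \<Prod>n\<in>S. f n (restrict x S n)) = (\<lambda>x. \<Prod>n\<in>S. f n (x n))"
    by (rule ext) (rule prod.cong, auto)
  have I1: "integrable (PiM S (\<lambda>_. gam)) (\<lambda>y. \<Prod>n\<in>S. f n (y n))"
    by (rule NU.product_integrable_prod[OF S f])
  show "integrable nu0 (\<lambda>x. \<Prod>n\<in>S. f n (x n))"
    using I1 integrable_distr_eq[OF rm gm] unfolding D eqf by simp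
  have "integral\<^sup>L (PiM S (\<lambda>_. gam)) (\<lambda>y. \<Prod>n\<in>S. f n (y n)) = (\<Prod>n\<in>S. integral\<^sup>L gam (f n))"
    by (rule NU.product_integral_prod[OF S f])
  then show "integral\<^sup>L nu0 (\<lambda>x. \<Prod>n\<in>S. f n (x n)) = (\<Prod>n\<in>S. integral\<^sup>L gam (f n))"
    using integral_distr[OF rm gm] unfolding D eqf by simp
qed

lemma abs_mult_le_sq: "\<bar>a * b\<bar> \<le> a\<^sup>2 + (b::real)\<^sup>2"
proof -
  have "0 \<le> (\<bar>a\<bar> - \<bar>b\<bar>)\<^sup>2" by simp
  then have h: "2 * (\<bar>a\<bar> * \<bar>b\<bar>) \<le> a\<^sup>2 + b\<^sup>2" by (simp add: power2_eq_square algebra_simps)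
  have "0 \<le> \<bar>a\<bar> * \<bar>b\<bar>" by simp
  with h have "\<bar>a\<bar> * \<bar>b\<bar> \<le> a\<^sup>2 + b\<^sup>2" by linarith
  then show ?thesis by (simp add: abs_mult)
qed

lemma hermite_pair_int: "integrable gam (\<lambda>t. hermite i t * hermite j t)"
proof -
  have "(\<lambda>t. hermite i t * hermite j t) = poly (smult (1 / (fact i * fact j)) (He i * He j))"
    by (rule ext) (simp add: hermite_He)
  then show ?thesis using int_poly by metis
qed

definition nH :: "(int \<Rightarrow> nat) \<Rightarrow> real" where
  "nH I = (\<Prod>n\<in>supp I. 1 / fact (I n))"

lemma nH_pos: "nH I > 0"
  unfolding nH_def by (rule prod_pos) simp

lemma HH:
  assumes I: "multi_index I" and J: "multi_index J"
  shows "integrable nu0 (\<lambda>x. hermite_multi I x * hermite_multi J x)"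
    and "integral\<^sup>L nu0 (\<lambda>x. hermite_multi I x * hermite_multi J x) = (if I = J then nH I else 0)"
proof -
  define S where "S = supp I \<union> supp J"
  have S: "finite S" using I J by (simp add: S_def multi_index_def)
  have eq: "(\<lambda>x. hermite_multi I x * hermite_multi J x) = (\<lambda>x. \<Prod>n\<in>S. hermite (I n) (x n) * hermite (J n) (x n))"
  proof
    fix x
    have "hermite_multi I x = (\<Prod>n\<in>S. hermite (I n) (x n))"
      by (rule hermite_multi_superset[OF S]) (auto simp: S_def)
    moreover have "hermite_multi J x = (\<Prod>n\<in>S. hermite (J n) (x n))"
      by (rule hermite_multi_superset[OF S]) (auto simp: S_def)
    ultimately show "hermite_multi I x * hermite_multi J x = (\<Prod>n\<in>S. hermite (I n) (x n) * hermite (J n) (x n))"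
      by (simp add: prod.distrib)
  qed
  show "integrable nu0 (\<lambda>x. hermite_multi I x * hermite_multi J x)"
    unfolding eq using prod_integral(1)[OF S, of "\<lambda>n t. hermite (I n) t * hermite (J n) t"]
    by (simp add: hermite_pair_int)
  have "integral\<^sup>L nu0 (\<lambda>x. hermite_multi I x * hermite_multi J x) = (\<Prod>n\<in>S. if I n = J n then 1 / fact (I n) else 0)"
    unfolding eq using prod_integral(2)[OF S, of "\<lambda>n t. hermite (I n) t * hermite (J n) t"]
    by (simp add: hermite_pair_int hermite_orth)
  also have "\<dots> = (if I = J then nH I else 0)"
  proof (cases "I = J")
    case True
    then show ?thesis unfolding nH_def S_def by simp
  next
    case False
    then obtain n where n: "I n \<noteq> J n" by auto
    then have "n \<in> S" by (auto simp: S_def supp_def)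
    then show ?thesis using False n S by (auto intro!: bexI[of _ n] simp: prod_zero_iff)
  qed
  finally show "integral\<^sup>L nu0 (\<lambda>x. hermite_multi I x * hermite_multi J x) = (if I = J then nH I else 0)" .
qed

lemma L2_meas: "L2 f \<Longrightarrow> f \<in> borel_measurable nu0"
  by (simp add: L2_def)

lemma L2_mult: assumes "L2 f" "L2 g" shows "integrable nu0 (\<lambda>x. f x * g x)"
proof (rule Bochner_Integration.integrable_bound)
  show "integrable nu0 (\<lambda>x. (f x)\<^sup>2 + (g x)\<^sup>2)"
    using assms by (simp add: L2_def)
  show "(\<lambda>x. f x * g x) \<in> borel_measurable nu0"
    using assms by (simp add: L2_def borel_measurable_times)
  show "AE x in nu0. norm (f x * g x) \<le> norm ((f x)\<^sup>2 + (g x)\<^sup>2)"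
    using abs_mult_le_sq by (auto simp: abs_le_iff)
qed

lemma L2_H: "multi_index I \<Longrightarrow> L2 (hermite_multi I)"
  unfolding L2_def using HH(1)[of I I] H_meas by (simp add: power2_eq_square)

lemma L2_add: assumes "L2 f" "L2 g" shows "L2 (\<lambda>x. f x + g x)"
proof -
  have "(\<lambda>x. (f x + g x)\<^sup>2) = (\<lambda>x. (f x)\<^sup>2 + 2 * (f x * g x) + (g x)\<^sup>2)"
    by (rule ext) (simp add: power2_eq_square algebra_simps)
  moreover have "integrable nu0 (\<lambda>x. (f x)\<^sup>2 + 2 * (f x * g x) + (g x)\<^sup>2)"
    using assms L2_mult[OF assms] by (simp add: L2_def)
  ultimately show ?thesis using assms by (simp add: L2_def borel_measurable_add)
qed

lemma L2_scale: assumes "L2 f" shows "L2 (\<lambda>x. r * f x)"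
proof -
  have "(\<lambda>x. (r * f x)\<^sup>2) = (\<lambda>x. r\<^sup>2 * (f x)\<^sup>2)"
    by (rule ext) (simp add: power2_eq_square algebra_simps)
  then show ?thesis using assms by (simp add: L2_def borel_measurable_times)
qed

lemma L2_diff: assumes "L2 f" "L2 g" shows "L2 (\<lambda>x. f x - g x)"
  using L2_add[OF assms(1) L2_scale[OF assms(2), of "-1"]] by simp

lemma L2_zero: "L2 (\<lambda>x. 0)"
  by (simp add: L2_def)

lemma L2_sum: "finite T \<Longrightarrow> (\<And>t. t \<in> T \<Longrightarrow> L2 (f t)) \<Longrightarrow> L2 (\<lambda>x. \<Sum>t\<in>T. f t x)"
proof (induction T rule: finite_induct)
  case empty then show ?case by (simp add: L2_zero)
next
  case (insert t T) then show ?case by (simp add: L2_add)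
qed

lemma L2_hsum: "finite A \<Longrightarrow> \<forall>I\<in>A. multi_index I \<Longrightarrow> L2 (hsum A c)"
  unfolding hsum_def by (intro L2_sum L2_scale L2_H) auto

definition sh :: "int \<Rightarrow> (int \<Rightarrow> real) \<Rightarrow> (int \<Rightarrow> real)" where
  "sh m x = (\<lambda>n. x (n + m))"

lemma shift_sh: "shift m f x = f (sh m x)"
  by (simp add: shift_def sh_def)

lemma sh_meas: "sh m \<in> measurable nu0 nu0"
proof -
  have "(\<lambda>\<omega> i. \<omega> (i + m)) \<in> measurable (PiM UNIV (\<lambda>_::int. gam)) (PiM UNIV (\<lambda>_::int. gam))"
    by (rule measurable_PiM_single') (auto simp: space_PiM)
  then show ?thesis by (simp add: nu0_eq sh_def[abs_def])
qed

lemma sh_distr: "distr nu0 nu0 (sh m) = nu0"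
proof -
  have "distr (PiM UNIV (\<lambda>_::int. gam)) (PiM UNIV (\<lambda>i. gam)) (\<lambda>\<omega>. \<lambda>n\<in>UNIV. \<omega> (n + m)) = PiM UNIV (\<lambda>i. gam)"
    by (rule distr_PiM_reindex[of UNIV "\<lambda>_. gam" "\<lambda>n. n + m" UNIV]) (auto simp: prob_gam inj_on_def)
  moreover have "(\<lambda>\<omega>. \<lambda>n\<in>(UNIV::int set). \<omega> (n + m)) = sh m"
    by (rule ext) (simp add: sh_def restrict_def)
  ultimately show ?thesis by (simp add: nu0_eq)
qed

lemma shift_meas: "f \<in> borel_measurable nu0 \<Longrightarrow> shift m f \<in> borel_measurable nu0"
  unfolding shift_sh[abs_def] by (rule measurable_compose[OF sh_meas])

lemma integral_shift: "f \<in> borel_measurable nu0 \<Longrightarrow> integral\<^sup>L nu0 (shift m f) = integral\<^sup>L nu0 f"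
  unfolding shift_sh[abs_def] using integral_distr[OF sh_meas, of f m] sh_distr[of m] by simp

lemma integrable_shift: "f \<in> borel_measurable nu0 \<Longrightarrow> integrable nu0 (shift m f) \<longleftrightarrow> integrable nu0 f"
  unfolding shift_sh[abs_def] using integrable_distr_eq[OF sh_meas, of f m] sh_distr[of m] by simp

lemma L2_shift: "L2 f \<Longrightarrow> L2 (shift m f)"
proof -
  assume f: "L2 f"
  have m: "(\<lambda>x. (f x)\<^sup>2) \<in> borel_measurable nu0" using f by (simp add: L2_def borel_measurable_power)
  have "(\<lambda>x. (shift m f x)\<^sup>2) = shift m (\<lambda>x. (f x)\<^sup>2)" by (rule ext) (simp add: shift_def)
  then show ?thesis using f integrable_shift[OF m, of m] shift_meas[of f m] by (simp add: L2_def)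
qed

definition ish :: "int \<Rightarrow> (int \<Rightarrow> nat) \<Rightarrow> (int \<Rightarrow> nat)" where
  "ish m I = (\<lambda>k. I (k - m))"

lemma supp_ish: "supp (ish m I) = (\<lambda>n. n + m) ` supp I"
proof
  show "supp (ish m I) \<subseteq> (\<lambda>n. n + m) ` supp I"
  proof
    fix k assume "k \<in> supp (ish m I)"
    then have "k - m \<in> supp I" "k = (k - m) + m" by (auto simp: supp_def ish_def)
    then show "k \<in> (\<lambda>n. n + m) ` supp I" by blast
  qed
qed (auto simp: supp_def ish_def)

lemma multi_index_ish[simp]: "multi_index I \<Longrightarrow> multi_index (ish m I)"
  by (simp add: multi_index_def supp_ish)

lemma degree_ish[simp]: "Defs.degree (ish m I) = Defs.degree I"
  unfolding degree_def supp_ish by (subst sum.reindex) (auto simp: inj_on_def ish_def)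

lemma ish_ish: "ish m (ish (- m) J) = J"
  by (simp add: ish_def)

lemma shift_H: "shift m (hermite_multi I) = hermite_multi (ish m I)"
proof
  fix x
  have "hermite_multi (ish m I) x = (\<Prod>k\<in>(\<lambda>n. n + m) ` supp I. hermite (I (k - m)) (x k))"
    unfolding hermite_multi_def supp_ish by (simp add: ish_def)
  also have "\<dots> = (\<Prod>n\<in>supp I. hermite (I n) (x (n + m)))"
    by (subst prod.reindex) (auto simp: inj_on_def)
  finally show "shift m (hermite_multi I) x = hermite_multi (ish m I) x"
    by (simp add: shift_def hermite_multi_def)
qed

lemma shift_pair:
  assumes f: "f \<in> borel_measurable nu0"
  shows "integral\<^sup>L nu0 (\<lambda>x. shift m f x * hermite_multi J x) = integral\<^sup>L nu0 (\<lambda>x. f x * hermite_multi (ish (- m) J) x)"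
proof -
  have "(\<lambda>x. shift m f x * hermite_multi J x) = shift m (\<lambda>x. f x * hermite_multi (ish (- m) J) x)"
  proof
    fix x
    have "hermite_multi J x = shift m (hermite_multi (ish (- m) J)) x"
      by (simp add: shift_H ish_ish)
    then show "shift m f x * hermite_multi J x = shift m (\<lambda>x. f x * hermite_multi (ish (- m) J) x) x"
      by (simp add: shift_def)
  qed
  moreover have "(\<lambda>x. f x * hermite_multi (ish (- m) J) x) \<in> borel_measurable nu0"
    using f H_meas by (rule borel_measurable_times)
  ultimately show ?thesis by (simp add: integral_shift)
qed

lemma shift_pair_int:
  assumes "L2 f" "multi_index J"
  shows "integrable nu0 (\<lambda>x. shift m f x * hermite_multi J x)"
  by (rule L2_mult[OF L2_shift[OF assms(1)] L2_H[OF assms(2)]])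

lemma young_pt: fixes t u v :: real assumes "t > 0" shows "\<bar>u * v\<bar> \<le> (t * u\<^sup>2 + v\<^sup>2 / t) / 2"
proof -
  have "0 \<le> (t * \<bar>u\<bar> - \<bar>v\<bar>)\<^sup>2" by simp
  then have "2 * t * (\<bar>u\<bar> * \<bar>v\<bar>) \<le> t\<^sup>2 * u\<^sup>2 + v\<^sup>2"
    by (simp add: power2_eq_square algebra_simps)
  then have "2 * t * (\<bar>u\<bar> * \<bar>v\<bar>) \<le> t * (t * u\<^sup>2 + v\<^sup>2 / t)"
    using assms by (simp add: power2_eq_square algebra_simps)
  then have "2 * (\<bar>u\<bar> * \<bar>v\<bar>) \<le> t * u\<^sup>2 + v\<^sup>2 / t"
    using assms by (simp add: mult.assoc)
  then show ?thesis by (simp add: abs_mult)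
qed

lemma young_int:
  assumes u: "L2 u" and v: "L2 v" and t: "t > 0"
  shows "\<bar>integral\<^sup>L nu0 (\<lambda>x. u x * v x)\<bar> \<le> (t * integral\<^sup>L nu0 (\<lambda>x. (u x)\<^sup>2) + integral\<^sup>L nu0 (\<lambda>x. (v x)\<^sup>2) / t) / 2"
proof -
  have "\<bar>integral\<^sup>L nu0 (\<lambda>x. u x * v x)\<bar> \<le> integral\<^sup>L nu0 (\<lambda>x. \<bar>u x * v x\<bar>)"
    by (rule integral_abs_bound)
  also have "\<dots> \<le> integral\<^sup>L nu0 (\<lambda>x. (t * (u x)\<^sup>2 + (v x)\<^sup>2 / t) / 2)"
    using u v L2_mult[OF u v] young_pt[OF t] by (intro integral_mono) (auto simp: L2_def)
  also have "\<dots> = (t * integral\<^sup>L nu0 (\<lambda>x. (u x)\<^sup>2) + integral\<^sup>L nu0 (\<lambda>x. (v x)\<^sup>2) / t) / 2"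
    using u v by (simp add: L2_def)
  finally show ?thesis .
qed

lemma zero_by_eps: assumes K: "K > 0" and h: "\<And>e. e > 0 \<Longrightarrow> \<bar>a::real\<bar> \<le> e * K" shows "a = 0"
proof (rule ccontr)
  assume "a \<noteq> 0"
  then have "\<bar>a\<bar> / (2 * K) > 0" using K by simp
  from h[OF this] have "\<bar>a\<bar> \<le> \<bar>a\<bar> / 2" using K by simp
  then show False using \<open>a \<noteq> 0\<close> by simp
qed

lemma int_f_hsum:
  assumes f: "L2 f" and A: "finite A" "\<forall>I\<in>A. multi_index I"
  shows "integral\<^sup>L nu0 (\<lambda>x. f x * hsum A c x) = (\<Sum>I\<in>A. c I * integral\<^sup>L nu0 (\<lambda>x. f x * hermite_multi I x))"
proof -
  have "(\<lambda>x. f x * hsum A c x) = (\<lambda>x. \<Sum>I\<in>A. c I * (f x * hermite_multi I x))"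
    by (rule ext) (simp add: hsum_def sum_distrib_left algebra_simps)
  moreover have "\<And>I. I \<in> A \<Longrightarrow> integrable nu0 (\<lambda>x. f x * hermite_multi I x)"
    using A f by (auto intro!: L2_mult L2_H)
  ultimately show ?thesis by (simp add: Bochner_Integration.integral_sum)
qed

lemma int_hsum_H:
  assumes A: "finite A" "\<forall>I\<in>A. multi_index I" and J: "multi_index J"
  shows "integral\<^sup>L nu0 (\<lambda>x. hsum A c x * hermite_multi J x) = (\<Sum>I\<in>A. c I * (if I = J then nH I else 0))"
proof -
  have "integral\<^sup>L nu0 (\<lambda>x. hsum A c x * hermite_multi J x) = integral\<^sup>L nu0 (\<lambda>x. hermite_multi J x * hsum A c x)"
    by (simp add: mult.commute)
  also have "\<dots> = (\<Sum>I\<in>A. c I * integral\<^sup>L nu0 (\<lambda>x. hermite_multi J x * hermite_multi I x))"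
    by (rule int_f_hsum[OF L2_H[OF J] A])
  also have "\<dots> = (\<Sum>I\<in>A. c I * (if I = J then nH I else 0))"
    using A J by (intro sum.cong refl) (auto simp: HH(2))
  finally show ?thesis .
qed

lemma proj_perp:
  assumes P: "is_proj N xi P" and J: "multi_index J" and dJ: "Defs.degree J \<noteq> N"
  shows "integral\<^sup>L nu0 (\<lambda>x. P x * hermite_multi J x) = 0"
proof (rule zero_by_eps)
  show "(1 + nH J) / 2 > 0" using nH_pos[of J] by simp
  fix e :: real assume e: "e > 0"
  have LP: "L2 P" using P by (simp add: is_proj_def)
  obtain A c where A: "finite A" "\<forall>I\<in>A. multi_index I \<and> Defs.degree I = N"
    and err: "integral\<^sup>L nu0 (\<lambda>x. (P x - (\<Sum>I\<in>A. c I * hermite_multi I x))\<^sup>2) < e\<^sup>2"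
    using P e unfolding is_proj_def by (meson zero_less_power)
  have Am: "\<forall>I\<in>A. multi_index I" using A by blast
  have S0: "integral\<^sup>L nu0 (\<lambda>x. hsum A c x * hermite_multi J x) = 0"
    unfolding int_hsum_H[OF A(1) Am J] using A dJ by (intro sum.neutral) auto
  define u where "u = (\<lambda>x. P x - hsum A c x)"
  have Lu: "L2 u" unfolding u_def using LP L2_hsum[OF A(1) Am] by (rule L2_diff)
  have "integral\<^sup>L nu0 (\<lambda>x. P x * hermite_multi J x) =
        integral\<^sup>L nu0 (\<lambda>x. u x * hermite_multi J x) + integral\<^sup>L nu0 (\<lambda>x. hsum A c x * hermite_multi J x)"
    unfolding u_def
    by (subst Bochner_Integration.integral_add[symmetric])
       (auto intro!: L2_mult L2_diff LP L2_hsum A(1) Am L2_H J simp: algebra_simps)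
  also have "\<dots> = integral\<^sup>L nu0 (\<lambda>x. u x * hermite_multi J x)" using S0 by simp
  finally have eq: "integral\<^sup>L nu0 (\<lambda>x. P x * hermite_multi J x) = integral\<^sup>L nu0 (\<lambda>x. u x * hermite_multi J x)" .
  have "\<bar>integral\<^sup>L nu0 (\<lambda>x. u x * hermite_multi J x)\<bar> \<le>
       ((1 / e) * integral\<^sup>L nu0 (\<lambda>x. (u x)\<^sup>2) + integral\<^sup>L nu0 (\<lambda>x. (hermite_multi J x)\<^sup>2) / (1 / e)) / 2"
    using e by (intro young_int Lu L2_H J) simp
  also have "integral\<^sup>L nu0 (\<lambda>x. (hermite_multi J x)\<^sup>2) = nH J"
    using HH(2)[OF J J] by (simp add: power2_eq_square)
  also have "(1 / e) * integral\<^sup>L nu0 (\<lambda>x. (u x)\<^sup>2) \<le> (1 / e) * e\<^sup>2"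
    using err e unfolding u_def hsum_def by (intro mult_left_mono) auto
  also have "(1 / e) * e\<^sup>2 = e" by (simp add: power2_eq_square)
  finally show "\<bar>integral\<^sup>L nu0 (\<lambda>x. P x * hermite_multi J x)\<bar> \<le> e * ((1 + nH J) / 2)"
    unfolding eq using e by (simp add: field_simps)
qed

lemma proj_same:
  assumes P: "is_proj N xi P" and xi: "L2 xi" and J: "multi_index J" and dJ: "Defs.degree J = N"
  shows "integral\<^sup>L nu0 (\<lambda>x. P x * hermite_multi J x) = integral\<^sup>L nu0 (\<lambda>x. xi x * hermite_multi J x)"
proof -
  have LP: "L2 P" using P by (simp add: is_proj_def)
  have "integral\<^sup>L nu0 (\<lambda>x. (xi x - P x) * hermite_multi J x) = 0"
    using P J dJ unfolding is_proj_def by blast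
  moreover have "integral\<^sup>L nu0 (\<lambda>x. (xi x - P x) * hermite_multi J x) =
     integral\<^sup>L nu0 (\<lambda>x. xi x * hermite_multi J x) - integral\<^sup>L nu0 (\<lambda>x. P x * hermite_multi J x)"
    by (subst Bochner_Integration.integral_diff[symmetric])
       (auto intro!: L2_mult LP xi L2_H J simp: algebra_simps)
  ultimately show ?thesis by simp
qed

lemma proj_shift_H:
  assumes P: "is_proj N xi P" and xi: "L2 xi" and J: "multi_index J"
  shows "integral\<^sup>L nu0 (\<lambda>x. shift m P x * hermite_multi J x) =
    (if Defs.degree J = N then integral\<^sup>L nu0 (\<lambda>x. shift m xi x * hermite_multi J x) else 0)"
proof -
  have LP: "L2 P" using P by (simp add: is_proj_def)
  have J': "multi_index (ish (- m) J)" using J by simp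
  show ?thesis
    unfolding shift_pair[OF L2_meas[OF LP]] shift_pair[OF L2_meas[OF xi]]
    using proj_perp[OF P J'] proj_same[OF P xi J'] by simp
qed

lemma int_Dstar:
  assumes f: "L2 f" and K: "finite {k. a k \<noteq> 0}" and A: "finite A" "\<forall>I\<in>A. multi_index I"
  shows "integral\<^sup>L nu0 (\<lambda>x. f x * Dstar a n (hsum A c) x) =
    (\<Sum>k\<in>{k. a k \<noteq> 0}. \<Sum>I\<in>A. a k * c I * (of_nat (I (k + n)) + 1) *
        integral\<^sup>L nu0 (\<lambda>x. f x * hermite_multi (up I (k + n)) x))"
proof -
  have "(\<lambda>x. f x * Dstar a n (hsum A c) x) = (\<lambda>x. \<Sum>k\<in>{k. a k \<noteq> 0}. \<Sum>I\<in>A.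
      a k * c I * (of_nat (I (k + n)) + 1) * (f x * hermite_multi (up I (k + n)) x))"
    by (rule ext) (simp add: Dstar_hsum[OF A(2)] sum_distrib_left algebra_simps)
  moreover have "\<And>k I. I \<in> A \<Longrightarrow> integrable nu0 (\<lambda>x. f x * hermite_multi (up I (k + n)) x)"
    using A f by (auto intro!: L2_mult L2_H)
  ultimately show ?thesis
    by (simp add: Bochner_Integration.integral_sum)
qed

lemma cyl_hsum:
  assumes "cyl_poly \<phi>"
  obtains A c where "finite A" "\<forall>I\<in>A. multi_index I" "\<phi> = hsum A c"
  using cyl_hs[OF assms] unfolding spanB_def hsum_def by blast

lemma hsum_cyl: "finite A \<Longrightarrow> \<forall>I\<in>A. multi_index I \<Longrightarrow> cyl_poly (hsum A c)"
  by (rule hs_cyl) (auto simp: spanB_def hsum_def)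

lemma fwd:
  assumes K: "finite {k. a k \<noteq> 0}" and xi: "L2 xi" and P: "is_proj N xi P"
    and A: "finite A" "\<forall>I\<in>A. multi_index I"
  shows "integral\<^sup>L nu0 (\<lambda>x. shift m P x * Dstar a n (hsum A c) x) =
         integral\<^sup>L nu0 (\<lambda>x. shift m xi x * Dstar a n (hsum {I\<in>A. Suc (Defs.degree I) = N} c) x)"
proof -
  have LP: "L2 P" using P by (simp add: is_proj_def)
  have A': "finite {I\<in>A. Suc (Defs.degree I) = N}" "\<forall>I\<in>{I\<in>A. Suc (Defs.degree I) = N}. multi_index I"
    using A by auto
  show ?thesis
    unfolding int_Dstar[OF L2_shift[OF LP] K A] int_Dstar[OF L2_shift[OF xi] K A']
  proof (rule sum.cong[OF refl])
    fix k
    show "(\<Sum>I\<in>A. a k * c I * (of_nat (I (k + n)) + 1) * integral\<^sup>L nu0 (\<lambda>x. shift m P x * hermite_multi (up I (k + n)) x)) =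
          (\<Sum>I\<in>{I\<in>A. Suc (Defs.degree I) = N}. a k * c I * (of_nat (I (k + n)) + 1) * integral\<^sup>L nu0 (\<lambda>x. shift m xi x * hermite_multi (up I (k + n)) x))"
      unfolding sum.inter_filter[OF A(1)]
      using A by (intro sum.cong refl) (auto simp: proj_shift_H[OF P xi] degree_up)
  qed
qed

lemma bwd:
  assumes K: "finite {k. a k \<noteq> 0}" and xi: "L2 xi" and Pf: "\<And>N. is_proj N xi (Pf N)"
    and A: "finite A" "\<forall>I\<in>A. multi_index I" and d: "\<forall>I\<in>A. Suc (Defs.degree I) \<le> d"
  shows "integral\<^sup>L nu0 (\<lambda>x. shift m xi x * Dstar a n (hsum A c) x) =
         (\<Sum>N\<le>d. integral\<^sup>L nu0 (\<lambda>x. shift m (Pf N) x * Dstar a n (hsum A c) x))"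
proof -
  have LP: "\<And>N. L2 (Pf N)" using Pf by (simp add: is_proj_def)
  have "(\<Sum>N\<le>d. integral\<^sup>L nu0 (\<lambda>x. shift m (Pf N) x * Dstar a n (hsum A c) x)) =
    (\<Sum>N\<le>d. \<Sum>k\<in>{k. a k \<noteq> 0}. \<Sum>I\<in>A. a k * c I * (of_nat (I (k + n)) + 1) *
        (if Suc (Defs.degree I) = N then integral\<^sup>L nu0 (\<lambda>x. shift m xi x * hermite_multi (up I (k + n)) x) else 0))"
    unfolding int_Dstar[OF L2_shift[OF LP] K A]
    using A by (intro sum.cong refl) (auto simp: proj_shift_H[OF Pf xi] degree_up)
  also have "\<dots> = (\<Sum>k\<in>{k. a k \<noteq> 0}. \<Sum>I\<in>A. \<Sum>N\<le>d. a k * c I * (of_nat (I (k + n)) + 1) *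
        (if Suc (Defs.degree I) = N then integral\<^sup>L nu0 (\<lambda>x. shift m xi x * hermite_multi (up I (k + n)) x) else 0))"
    by (subst sum.swap) (rule sum.cong[OF refl], rule sum.swap)
  also have "\<dots> = (\<Sum>k\<in>{k. a k \<noteq> 0}. \<Sum>I\<in>A. a k * c I * (of_nat (I (k + n)) + 1) *
        integral\<^sup>L nu0 (\<lambda>x. shift m xi x * hermite_multi (up I (k + n)) x))"
  proof (intro sum.cong refl)
    fix k I assume "I \<in> A"
    then have "Suc (Defs.degree I) \<in> {..d}" using d by auto
    then show "(\<Sum>N\<le>d. a k * c I * (of_nat (I (k + n)) + 1) *
        (if Suc (Defs.degree I) = N then integral\<^sup>L nu0 (\<lambda>x. shift m xi x * hermite_multi (up I (k + n)) x) else 0)) =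
        a k * c I * (of_nat (I (k + n)) + 1) * integral\<^sup>L nu0 (\<lambda>x. shift m xi x * hermite_multi (up I (k + n)) x)"
      by (simp add: sum.delta if_distrib[of "\<lambda>z. _ * z"] cong: if_cong)
  qed
  also have "\<dots> = integral\<^sup>L nu0 (\<lambda>x. shift m xi x * Dstar a n (hsum A c) x)"
    by (rule int_Dstar[OF L2_shift[OF xi] K A, symmetric])
  finally show ?thesis by simp
qed

lemma main_equiv:
  fixes a :: "int \<Rightarrow> real" and xi :: "(int \<Rightarrow> real) \<Rightarrow> real"
  assumes K: "finite {k. a k \<noteq> 0}" and xi: "L2 xi" and ex: "\<And>N. \<exists>P. is_proj N xi P"
  shows "D0_closed a xi \<longleftrightarrow> (\<forall>N P. is_proj N xi P \<longrightarrow> D0_closed a P)"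
proof
  assume C: "D0_closed a xi"
  show "\<forall>N P. is_proj N xi P \<longrightarrow> D0_closed a P"
  proof (intro allI impI)
    fix N P assume P: "is_proj N xi P"
    show "D0_closed a P"
      unfolding D0_closed_def
    proof (intro allI impI)
      fix m n \<phi> assume "cyl_poly \<phi>"
      then obtain A c where A: "finite A" "\<forall>I\<in>A. multi_index I" and phi: "\<phi> = hsum A c"
        by (rule cyl_hsum)
      define A' where "A' = {I\<in>A. Suc (Defs.degree I) = N}"
      have "cyl_poly (hsum A' c)" using A unfolding A'_def by (intro hsum_cyl) auto
      then have "integral\<^sup>L nu0 (\<lambda>x. shift m xi x * Dstar a n (hsum A' c) x) =
                 integral\<^sup>L nu0 (\<lambda>x. shift n xi x * Dstar a m (hsum A' c) x)"
        using C unfolding D0_closed_def by blast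
      then show "integral\<^sup>L nu0 (\<lambda>x. shift m P x * Dstar a n \<phi> x) = integral\<^sup>L nu0 (\<lambda>x. shift n P x * Dstar a m \<phi> x)"
        unfolding phi fwd[OF K xi P A] A'_def .
    qed
  qed
next
  assume H: "\<forall>N P. is_proj N xi P \<longrightarrow> D0_closed a P"
  define Pf where "Pf N = (SOME P. is_proj N xi P)" for N
  have Pf: "\<And>N. is_proj N xi (Pf N)" unfolding Pf_def using ex by (rule someI_ex)
  show "D0_closed a xi"
    unfolding D0_closed_def
  proof (intro allI impI)
    fix m n \<phi> assume "cyl_poly \<phi>"
    then obtain A c where A: "finite A" "\<forall>I\<in>A. multi_index I" and phi: "\<phi> = hsum A c"
      by (rule cyl_hsum)
    define d where "d = Suc (Max (Defs.degree ` A))"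
    have d: "\<forall>I\<in>A. Suc (Defs.degree I) \<le> d" using A unfolding d_def by auto
    have "\<And>N. integral\<^sup>L nu0 (\<lambda>x. shift m (Pf N) x * Dstar a n \<phi> x) = integral\<^sup>L nu0 (\<lambda>x. shift n (Pf N) x * Dstar a m \<phi> x)"
      using H Pf \<open>cyl_poly \<phi>\<close> unfolding D0_closed_def by blast
    then show "integral\<^sup>L nu0 (\<lambda>x. shift m xi x * Dstar a n \<phi> x) = integral\<^sup>L nu0 (\<lambda>x. shift n xi x * Dstar a m \<phi> x)"
      unfolding phi bwd[OF K xi Pf A d] by simp
  qed
qed

lemma measure_nu0_space: "measure nu0 (space nu0) = 1"
  by (rule prob_space.prob_space[OF prob_nu0])

lemma L2_one: "L2 (\<lambda>x. 1)"
  using L2_H[OF multi_index_zero] by (simp add: hermite_multi_zero_fun)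

lemma L2_integrable: "L2 u \<Longrightarrow> integrable nu0 u"
  using L2_mult[of u "\<lambda>x. 1"] L2_one by simp

lemma L1_bound:
  assumes u: "L2 u" and t: "t > 0"
  shows "integral\<^sup>L nu0 (\<lambda>x. \<bar>u x\<bar>) \<le> (t * integral\<^sup>L nu0 (\<lambda>x. (u x)\<^sup>2) + 1 / t) / 2"
proof -
  have "integral\<^sup>L nu0 (\<lambda>x. \<bar>u x\<bar>) \<le> integral\<^sup>L nu0 (\<lambda>x. (t * (u x)\<^sup>2 + 1 / t) / 2)"
  proof (rule integral_mono)
    show "integrable nu0 (\<lambda>x. \<bar>u x\<bar>)" using L2_integrable[OF u] by simp
    show "integrable nu0 (\<lambda>x. (t * (u x)\<^sup>2 + 1 / t) / 2)" using u prob_nu0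
      by (simp add: L2_def prob_space.finite_measure finite_measure.integrable_const)
    fix x show "\<bar>u x\<bar> \<le> (t * (u x)\<^sup>2 + 1 / t) / 2" using young_pt[OF t, of "u x" 1] by simp
  qed
  also have "\<dots> = (t * integral\<^sup>L nu0 (\<lambda>x. (u x)\<^sup>2) + 1 / t) / 2"
    using u prob_nu0 measure_nu0_space
    by (simp add: L2_def prob_space.finite_measure finite_measure.integrable_const)
  finally show ?thesis .
qed

context
  fixes N :: nat and xi :: "(int \<Rightarrow> real) \<Rightarrow> real"
  assumes xi: "L2 xi"
begin

definition TT :: "nat \<Rightarrow> (int \<Rightarrow> nat) set" where
  "TT k = {I. multi_index I \<and> Defs.degree I = N \<and> supp I \<subseteq> {- int k..int k}}"

definition cf :: "(int \<Rightarrow> nat) \<Rightarrow> real" where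
  "cf I = integral\<^sup>L nu0 (\<lambda>x. xi x * hermite_multi I x) / nH I"

definition ff :: "nat \<Rightarrow> (int \<Rightarrow> real) \<Rightarrow> real" where
  "ff k = hsum (TT k) cf"

definition ss :: "nat \<Rightarrow> real" where
  "ss k = integral\<^sup>L nu0 (\<lambda>x. (ff k x)\<^sup>2)"

lemma TT_multi: "I \<in> TT k \<Longrightarrow> multi_index I" and TT_deg: "I \<in> TT k \<Longrightarrow> Defs.degree I = N"
  by (auto simp: TT_def)

lemma TT_fin: "finite (TT k)"
proof -
  have "TT k \<subseteq> {f. \<forall>x. (x \<in> {- int k..int k} \<longrightarrow> f x \<in> {0..N}) \<and> (x \<notin> {- int k..int k} \<longrightarrow> f x = 0)}"
  proof safe
    fix I x assume I: "I \<in> TT k"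
    { assume "x \<notin> {- int k..int k}"
      then show "I x = 0" using I by (auto simp: TT_def supp_def) }
    { show "I x \<in> {0..N}"
      proof (cases "x \<in> supp I")
        case True
        have "I x \<le> (\<Sum>n\<in>supp I. I n)"
          using I True by (intro member_le_sum) (auto simp: TT_def multi_index_def)
        then show ?thesis using I by (auto simp: TT_def degree_def)
      next
        case False then show ?thesis by (simp add: supp_def)
      qed }
  qed
  moreover have "finite {f. \<forall>x. (x \<in> {- int k..int k} \<longrightarrow> f x \<in> {0..N}) \<and> (x \<notin> {- int k..int k} \<longrightarrow> f x = (0::nat))}"
    by (rule finite_set_of_finite_funs) auto
  ultimately show ?thesis by (rule finite_subset)
qed

lemma TT_mono: "j \<le> k \<Longrightarrow> TT j \<subseteq> TT k"
  by (auto simp: TT_def)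

lemma TT_eventually:
  assumes J: "multi_index J" "Defs.degree J = N"
  obtains K where "\<And>k. k \<ge> K \<Longrightarrow> J \<in> TT k"
proof -
  have f: "finite (supp J)" using J by (simp add: multi_index_def)
  define K where "K = nat (Max (insert 0 (abs ` supp J)))"
  have "\<And>n. n \<in> supp J \<Longrightarrow> \<bar>n\<bar> \<le> int K"
    unfolding K_def using f by (auto intro!: Max_ge)
  then have "\<And>k. k \<ge> K \<Longrightarrow> J \<in> TT k"
  proof -
    fix k assume k: "k \<ge> K"
    have "supp J \<subseteq> {- int k..int k}"
    proof
      fix n assume "n \<in> supp J"
      then have "\<bar>n\<bar> \<le> int K" using \<open>\<And>n. n \<in> supp J \<Longrightarrow> \<bar>n\<bar> \<le> int K\<close> by blast
      then show "n \<in> {- int k..int k}" using k by (auto simp: abs_le_iff)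
    qed
    then show "J \<in> TT k" using J by (simp add: TT_def)
  qed
  then show ?thesis using that by blast
qed

lemma ff_L2: "L2 (ff k)"
  unfolding ff_def using TT_fin by (rule L2_hsum) (auto dest: TT_multi)

lemma ff_H: "J \<in> TT k \<Longrightarrow> integral\<^sup>L nu0 (\<lambda>x. ff k x * hermite_multi J x) = integral\<^sup>L nu0 (\<lambda>x. xi x * hermite_multi J x)"
proof -
  assume J: "J \<in> TT k"
  have "integral\<^sup>L nu0 (\<lambda>x. ff k x * hermite_multi J x) = (\<Sum>I\<in>TT k. cf I * (if I = J then nH I else 0))"
    unfolding ff_def using TT_fin J by (intro int_hsum_H) (auto dest: TT_multi)
  also have "\<dots> = cf J * nH J"
    using J TT_fin by (simp add: if_distrib[of "\<lambda>z. _ * z"] cong: if_cong)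
  also have "\<dots> = integral\<^sup>L nu0 (\<lambda>x. xi x * hermite_multi J x)"
    using nH_pos[of J] by (simp add: cf_def)
  finally show ?thesis .
qed

lemma ff_ff: "j \<le> k \<Longrightarrow> integral\<^sup>L nu0 (\<lambda>x. ff k x * ff j x) = integral\<^sup>L nu0 (\<lambda>x. xi x * ff j x)"
proof -
  assume jk: "j \<le> k"
  have A: "finite (TT j)" "\<forall>I\<in>TT j. multi_index I" using TT_fin by (auto dest: TT_multi)
  show ?thesis
    unfolding ff_def[of j] int_f_hsum[OF ff_L2 A] int_f_hsum[OF xi A]
    using TT_mono[OF jk] by (intro sum.cong refl) (auto simp: ff_H)
qed

lemma ss_eq: "ss k = integral\<^sup>L nu0 (\<lambda>x. xi x * ff k x)"
  using ff_ff[of k k] by (simp add: ss_def power2_eq_square)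

lemma sq_expand:
  assumes "L2 u" "L2 v"
  shows "integral\<^sup>L nu0 (\<lambda>x. (u x - v x)\<^sup>2) =
    integral\<^sup>L nu0 (\<lambda>x. (u x)\<^sup>2) - 2 * integral\<^sup>L nu0 (\<lambda>x. u x * v x) + integral\<^sup>L nu0 (\<lambda>x. (v x)\<^sup>2)"
proof -
  have "(\<lambda>x. (u x - v x)\<^sup>2) = (\<lambda>x. ((u x)\<^sup>2 - 2 * (u x * v x)) + (v x)\<^sup>2)"
    by (rule ext) (simp add: power2_eq_square algebra_simps)
  moreover have "integrable nu0 (\<lambda>x. (u x)\<^sup>2)" "integrable nu0 (\<lambda>x. (v x)\<^sup>2)"
    "integrable nu0 (\<lambda>x. u x * v x)"
    using assms L2_mult[OF assms] by (auto simp: L2_def)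
  ultimately show ?thesis by simp
qed

lemma ss_diff: "j \<le> k \<Longrightarrow> integral\<^sup>L nu0 (\<lambda>x. (ff k x - ff j x)\<^sup>2) = ss k - ss j"
proof -
  assume jk: "j \<le> k"
  have "integral\<^sup>L nu0 (\<lambda>x. ff k x * ff j x) = ss j"
    using ff_ff[OF jk] ss_eq[of j] by simp
  then show ?thesis
    unfolding sq_expand[OF ff_L2 ff_L2] by (simp add: ss_def)
qed

lemma ss_le: "ss k \<le> integral\<^sup>L nu0 (\<lambda>x. (xi x)\<^sup>2)"
proof -
  have "0 \<le> integral\<^sup>L nu0 (\<lambda>x. (xi x - ff k x)\<^sup>2)" by simp
  also have "\<dots> = integral\<^sup>L nu0 (\<lambda>x. (xi x)\<^sup>2) - ss k"
    unfolding sq_expand[OF xi ff_L2] ss_eq[symmetric] by (simp add: ss_def)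
  finally show ?thesis by simp
qed

lemma ss_mono: "incseq ss"
proof (rule incseq_SucI)
  fix k
  have "0 \<le> integral\<^sup>L nu0 (\<lambda>x. (ff (Suc k) x - ff k x)\<^sup>2)" by simp
  then show "ss k \<le> ss (Suc k)" using ss_diff[of k "Suc k"] by simp
qed

definition LL :: real where "LL = lim ss"

lemma ss_lim: "ss \<longlonglongrightarrow> LL" and ss_le_LL: "ss k \<le> LL"
proof -
  obtain L where L: "ss \<longlonglongrightarrow> L" "\<forall>i. ss i \<le> L"
    using incseq_convergent[OF ss_mono, of "integral\<^sup>L nu0 (\<lambda>x. (xi x)\<^sup>2)"] ss_le by blast
  then have "LL = L" unfolding LL_def by (simp add: limI)
  then show "ss \<longlonglongrightarrow> LL" "ss k \<le> LL" using L by auto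
qed

lemma ff_dist: "integral\<^sup>L nu0 (\<lambda>x. (ff a x - ff b x)\<^sup>2) \<le> (LL - ss a) + (LL - ss b)"
proof (cases "b \<le> a")
  case True
  then show ?thesis using ss_diff[OF True] ss_le_LL[of a] ss_le_LL[of b] by simp
next
  case False
  then have "a \<le> b" by simp
  have "(\<lambda>x. (ff a x - ff b x)\<^sup>2) = (\<lambda>x. (ff b x - ff a x)\<^sup>2)"
    by (rule ext) (simp add: power2_commute)
  then show ?thesis using ss_diff[OF \<open>a \<le> b\<close>] ss_le_LL[of a] ss_le_LL[of b] by simp
qed

lemma ss_close: "e > 0 \<Longrightarrow> \<exists>K. \<forall>k\<ge>K. LL - ss k < e"
proof -
  assume e: "e > 0"
  from ss_lim[unfolded LIMSEQ_def] e obtain K where "\<forall>k\<ge>K. dist (ss k) LL < e" by blast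
  show ?thesis
  proof (intro exI allI impI)
    fix k assume "K \<le> k"
    then have "\<bar>ss k - LL\<bar> < e" using \<open>\<forall>k\<ge>K. dist (ss k) LL < e\<close> by (simp add: dist_real_def)
    moreover have "\<bar>ss k - LL\<bar> = LL - ss k" using ss_le_LL[of k] by simp
    ultimately show "LL - ss k < e" by simp
  qed
qed

lemma ff_L1_cauchy:
  assumes e: "e > 0"
  shows "\<exists>M. \<forall>i\<ge>M. \<forall>j\<ge>M. integral\<^sup>L nu0 (\<lambda>x. norm (ff i x - ff j x)) < e"
proof -
  have "e\<^sup>2 / 8 > 0" using e by simp
  from ss_close[OF this] obtain K where K: "\<And>k. k \<ge> K \<Longrightarrow> LL - ss k < e\<^sup>2 / 8" by blast
  have "\<forall>i\<ge>K. \<forall>j\<ge>K. integral\<^sup>L nu0 (\<lambda>x. norm (ff i x - ff j x)) < e"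
  proof (intro allI impI)
    fix i j assume i: "i \<ge> K" and j: "j \<ge> K"
    have L2d: "L2 (\<lambda>x. ff i x - ff j x)" by (intro L2_diff ff_L2)
    have d: "integral\<^sup>L nu0 (\<lambda>x. (ff i x - ff j x)\<^sup>2) < e\<^sup>2 / 4"
      using ff_dist[of i j] K[OF i] K[OF j] by simp
    have "integral\<^sup>L nu0 (\<lambda>x. norm (ff i x - ff j x)) \<le> ((2 / e) * integral\<^sup>L nu0 (\<lambda>x. (ff i x - ff j x)\<^sup>2) + 1 / (2 / e)) / 2"
      using L1_bound[OF L2d, of "2 / e"] e by simp
    also have "\<dots> < e"
    proof -
      have "(2 / e) * integral\<^sup>L nu0 (\<lambda>x. (ff i x - ff j x)\<^sup>2) < (2 / e) * (e\<^sup>2 / 4)"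
        using d e by (intro mult_strict_left_mono) auto
      also have "(2 / e) * (e\<^sup>2 / 4) = e / 2" using e by (simp add: power2_eq_square field_simps)
      finally show ?thesis using e by simp
    qed
    finally show "integral\<^sup>L nu0 (\<lambda>x. norm (ff i x - ff j x)) < e" .
  qed
  then show ?thesis by blast
qed

lemma ex_subseq:
  obtains r where "strict_mono r" "AE x in nu0. Cauchy (\<lambda>i. ff (r i) x)"
proof -
  have int: "\<And>n. integrable nu0 (ff n)" using ff_L2 by (rule L2_integrable)
  show ?thesis
    using cauchy_L1_AE_cauchy_subseq[OF int ff_L1_cauchy] that by blast
qed

definition rr :: "nat \<Rightarrow> nat" where
  "rr = (SOME r. strict_mono r \<and> (AE x in nu0. Cauchy (\<lambda>i. ff (r i) x)))"

lemma rr: "strict_mono rr" "AE x in nu0. Cauchy (\<lambda>i. ff (rr i) x)"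
proof -
  obtain r where "strict_mono r" "AE x in nu0. Cauchy (\<lambda>i. ff (r i) x)" by (rule ex_subseq)
  then have "\<exists>r. strict_mono r \<and> (AE x in nu0. Cauchy (\<lambda>i. ff (r i) x))" by blast
  from someI_ex[OF this] have "strict_mono rr \<and> (AE x in nu0. Cauchy (\<lambda>i. ff (rr i) x))"
    unfolding rr_def .
  then show "strict_mono rr" "AE x in nu0. Cauchy (\<lambda>i. ff (rr i) x)" by auto
qed

definition PP :: "(int \<Rightarrow> real) \<Rightarrow> real" where
  "PP x = lim (\<lambda>i. ff (rr i) x)"

lemma PP_lim: "AE x in nu0. (\<lambda>i. ff (rr i) x) \<longlonglongrightarrow> PP x"
  using rr(2) by eventually_elim (simp add: PP_def Cauchy_convergent_iff convergent_LIMSEQ_iff)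

lemma PP_meas: "PP \<in> borel_measurable nu0"
proof -
  have "\<And>i. ff (rr i) \<in> borel_measurable nu0" using ff_L2 by (rule L2_meas)
  then have "(\<lambda>x. lim (\<lambda>i. ff (rr i) x)) \<in> borel_measurable nu0" by (rule borel_measurable_lim_metric)
  then show ?thesis by (simp add: PP_def[abs_def])
qed

definition dd :: "nat \<Rightarrow> real" where "dd i = 2 * (LL - ss (rr i))"

lemma dd_bound: "j \<ge> i \<Longrightarrow> integral\<^sup>L nu0 (\<lambda>x. (ff (rr j) x - ff (rr i) x)\<^sup>2) \<le> dd i"
proof -
  assume "j \<ge> i"
  then have "rr j \<ge> rr i" using rr(1) by (simp add: strict_mono_less_eq)
  then have "ss (rr i) \<le> ss (rr j)" using ss_mono by (simp add: incseq_def)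
  then show ?thesis using ff_dist[of "rr j" "rr i"] by (simp add: dd_def)
qed

lemma dd_small: "e > 0 \<Longrightarrow> \<exists>K. \<forall>i\<ge>K. dd i < e"
proof -
  assume e: "e > 0"
  then obtain K where K: "\<forall>k\<ge>K. LL - ss k < e / 2" using ss_close[of "e / 2"] by auto
  have "\<forall>i\<ge>K. dd i < e"
  proof (intro allI impI)
    fix i assume "K \<le> i"
    then have "K \<le> rr i" using seq_suble[OF rr(1), of i] by simp
    then have "LL - ss (rr i) < e / 2" using K by blast
    then show "dd i < e" by (simp add: dd_def)
  qed
  then show ?thesis by blast
qed

lemma err_L2: "L2 (\<lambda>x. PP x - ff (rr i) x)"
  and err_le: "integral\<^sup>L nu0 (\<lambda>x. (PP x - ff (rr i) x)\<^sup>2) \<le> dd i"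
proof -
  have fm: "\<And>k. ff k \<in> borel_measurable nu0" using ff_L2 by (rule L2_meas)
  define u where "u j x = ennreal ((ff (rr j) x - ff (rr i) x)\<^sup>2)" for j x
  have um: "\<And>j. u j \<in> borel_measurable nu0"
    unfolding u_def using fm by measurable
  have lim: "AE x in nu0. liminf (\<lambda>j. u j x) = ennreal ((PP x - ff (rr i) x)\<^sup>2)"
    using PP_lim
  proof eventually_elim
    case (elim x)
    have "(\<lambda>j. u j x) \<longlonglongrightarrow> ennreal ((PP x - ff (rr i) x)\<^sup>2)"
      unfolding u_def by (intro tendsto_intros elim)
    then show ?case by (rule lim_imp_Liminf[rotated]) simp
  qed
  have intu: "\<And>j. integral\<^sup>N nu0 (u j) = ennreal (integral\<^sup>L nu0 (\<lambda>x. (ff (rr j) x - ff (rr i) x)\<^sup>2))"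
    unfolding u_def using L2_diff[OF ff_L2 ff_L2]
    by (intro nn_integral_eq_integral) (auto simp: L2_def)
  have "(\<integral>\<^sup>+x. ennreal ((PP x - ff (rr i) x)\<^sup>2) \<partial>nu0) = (\<integral>\<^sup>+x. liminf (\<lambda>j. u j x) \<partial>nu0)"
    using lim by (intro nn_integral_cong_AE) (auto elim: eventually_mono)
  also have "\<dots> \<le> liminf (\<lambda>j. integral\<^sup>N nu0 (u j))"
    by (rule nn_integral_liminf[OF um])
  also have "\<dots> \<le> ennreal (dd i)"
  proof (rule Liminf_le)
    show "\<forall>\<^sub>F j in sequentially. integral\<^sup>N nu0 (u j) \<le> ennreal (dd i)"
      unfolding intu eventually_sequentially using dd_bound by (auto intro!: ennreal_leI)
  qed simp
  finally have nn: "(\<integral>\<^sup>+x. ennreal ((PP x - ff (rr i) x)\<^sup>2) \<partial>nu0) \<le> ennreal (dd i)" .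
  have m2: "(\<lambda>x. (PP x - ff (rr i) x)\<^sup>2) \<in> borel_measurable nu0"
    using PP_meas fm by measurable
  have int2: "integrable nu0 (\<lambda>x. (PP x - ff (rr i) x)\<^sup>2)"
  proof (rule integrableI_bounded[OF m2])
    have "(\<integral>\<^sup>+x. ennreal (norm ((PP x - ff (rr i) x)\<^sup>2)) \<partial>nu0) = (\<integral>\<^sup>+x. ennreal ((PP x - ff (rr i) x)\<^sup>2) \<partial>nu0)"
      by simp
    also have "\<dots> < \<infinity>" using nn by (simp add: le_less_trans)
    finally show "(\<integral>\<^sup>+x. ennreal (norm ((PP x - ff (rr i) x)\<^sup>2)) \<partial>nu0) < \<infinity>" .
  qed
  show "L2 (\<lambda>x. PP x - ff (rr i) x)"
    unfolding L2_def using PP_meas fm int2 by auto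
  have "ennreal (integral\<^sup>L nu0 (\<lambda>x. (PP x - ff (rr i) x)\<^sup>2)) = (\<integral>\<^sup>+x. ennreal ((PP x - ff (rr i) x)\<^sup>2) \<partial>nu0)"
    using int2 by (intro nn_integral_eq_integral[symmetric]) auto
  also note nn
  finally show "integral\<^sup>L nu0 (\<lambda>x. (PP x - ff (rr i) x)\<^sup>2) \<le> dd i"
    by (subst (asm) ennreal_le_iff) (auto simp: dd_def intro: order.trans[OF _ ss_le_LL])
qed

lemma PP_L2: "L2 PP"
proof -
  have "L2 (\<lambda>x. (PP x - ff (rr 0) x) + ff (rr 0) x)" by (intro L2_add err_L2 ff_L2)
  then show ?thesis by simp
qed

lemma PP_proj: "is_proj N xi PP"
  unfolding is_proj_def
proof (intro conjI allI impI)
  show "L2 PP" by (rule PP_L2)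
next
  fix e :: real assume e: "e > 0"
  obtain K where K: "\<forall>i\<ge>K. dd i < e" using dd_small[OF e] by blast
  have "dd K < e" using K by blast
  then have "integral\<^sup>L nu0 (\<lambda>x. (PP x - (\<Sum>I\<in>TT (rr K). cf I * hermite_multi I x))\<^sup>2) < e"
    using err_le[of K, unfolded ff_def hsum_def] by linarith
  moreover have "finite (TT (rr K))" "\<forall>I\<in>TT (rr K). multi_index I \<and> Defs.degree I = N"
    using TT_fin by (auto dest: TT_multi TT_deg)
  ultimately show "\<exists>A c. finite A \<and> (\<forall>I\<in>A. multi_index I \<and> Defs.degree I = N) \<and>
      integral\<^sup>L nu0 (\<lambda>x. (PP x - (\<Sum>I\<in>A. c I * hermite_multi I x))\<^sup>2) < e" by blast
next
  fix J assume J: "multi_index J \<and> Defs.degree J = N"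
  obtain K0 where K0: "\<And>k. k \<ge> K0 \<Longrightarrow> J \<in> TT k" using TT_eventually J by blast
  show "integral\<^sup>L nu0 (\<lambda>x. (xi x - PP x) * hermite_multi J x) = 0"
  proof (rule zero_by_eps)
    show "(1 + nH J) / 2 > 0" using nH_pos[of J] by simp
    fix e :: real assume e: "e > 0"
    obtain K1 where K1: "\<forall>i\<ge>K1. dd i < e\<^sup>2" using dd_small[of "e\<^sup>2"] e by auto
    define i where "i = max K0 K1"
    have Ji: "J \<in> TT (rr i)" using K0 seq_suble[OF rr(1), of i] by (simp add: i_def)
    have di: "dd i < e\<^sup>2" using K1 by (simp add: i_def)
    have JM: "multi_index J" using J by blast
    define u where "u = (\<lambda>x. PP x - ff (rr i) x)"
    have Lu: "L2 u" unfolding u_def by (rule err_L2)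
    have "integral\<^sup>L nu0 (\<lambda>x. (xi x - PP x) * hermite_multi J x) =
      (integral\<^sup>L nu0 (\<lambda>x. xi x * hermite_multi J x) - integral\<^sup>L nu0 (\<lambda>x. ff (rr i) x * hermite_multi J x))
       - integral\<^sup>L nu0 (\<lambda>x. u x * hermite_multi J x)"
      unfolding u_def
      by (subst Bochner_Integration.integral_diff[symmetric], (auto intro!: L2_mult xi ff_L2 L2_H JM err_L2)[2])+
         (simp add: algebra_simps)
    also have "\<dots> = - integral\<^sup>L nu0 (\<lambda>x. u x * hermite_multi J x)"
      using ff_H[OF Ji] by simp
    finally have eq: "\<bar>integral\<^sup>L nu0 (\<lambda>x. (xi x - PP x) * hermite_multi J x)\<bar> = \<bar>integral\<^sup>L nu0 (\<lambda>x. u x * hermite_multi J x)\<bar>"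
      by simp
    have "\<bar>integral\<^sup>L nu0 (\<lambda>x. u x * hermite_multi J x)\<bar> \<le>
       ((1 / e) * integral\<^sup>L nu0 (\<lambda>x. (u x)\<^sup>2) + integral\<^sup>L nu0 (\<lambda>x. (hermite_multi J x)\<^sup>2) / (1 / e)) / 2"
      using e by (intro young_int Lu L2_H JM) simp
    also have "integral\<^sup>L nu0 (\<lambda>x. (hermite_multi J x)\<^sup>2) = nH J"
      using HH(2)[OF JM JM] by (simp add: power2_eq_square)
    also have "(1 / e) * integral\<^sup>L nu0 (\<lambda>x. (u x)\<^sup>2) \<le> (1 / e) * e\<^sup>2"
      using err_le[of i] di e unfolding u_def by (intro mult_left_mono) auto
    also have "(1 / e) * e\<^sup>2 = e" by (simp add: power2_eq_square)
    finally show "\<bar>integral\<^sup>L nu0 (\<lambda>x. (xi x - PP x) * hermite_multi J x)\<bar> \<le> e * ((1 + nH J) / 2)"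
      unfolding eq using e by (simp add: field_simps)
  qed
qed

lemma proj_exists: "\<exists>P. is_proj N xi P"
  using PP_proj by blast

end

lemma proj_exists_global: "L2 xi \<Longrightarrow> \<exists>P. is_proj N xi P"
  by (rule proj_exists)

theorem lemma4p1:
  fixes a :: "int \<Rightarrow> real" and xi :: "(int \<Rightarrow> real) \<Rightarrow> real"
  assumes "finite {k. a k \<noteq> 0}" and "L2 xi"
  shows "D0_closed a xi \<longleftrightarrow> (\<forall>N P. is_proj N xi P \<longrightarrow> D0_closed a P)"
  by (rule main_equiv[OF assms(1) assms(2) proj_exists_global[OF assms(2)]])

end
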